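(* Let $M\le N$ and let $P\in M_M(M_N(\mathbb C))$ be a submagic matrix whose entries $P_{ij}$ are rank one projections. The following are equivalent: (1) the projections $P_{ij}$ pairwise commute; (2) $P$ comes from a pre-Latin square, i.e. there exist a pre-Latin square $L\in M_M(\{1,\ldots,N\})$ and an orthogonal basis $\xi_1,\ldots,\xi_N$ of $\mathbb C^N$ with $P_{ij}=\mathrm{Proj}(\xi_{L_{ij}})$ for all $i,j$. Moreover, in this case, the bialgebra image of $\pi_P:\widetilde A_s(M)\to M_N(\mathbb C)$, $u_{ij}\mapsto P_{ij}$, is $C(G)$, where $G\subset\widetilde S_M$ is the semigroup associated to $L$, with $u_{ij}$ mapped to the function $\sigma\mapsto1$ if $\sigma(j)=i$ and $0$ otherwise.
   Context: A submagic matrix is a square matrix whose entries are orthogonal projections, pairwise orthogonal within each row and within each column. $\widetilde A_s(M)$ is the universal unital $C^*$-algebra generated by the entries $u_{ij}$ of an $M\times M$ submagic matrix, with comultiplication $\Delta(u_{ij})=\sum_k u_{ik}\otimes u_{kj}$. $\mathrm{Proj}(\xi)$ is the orthogonal projection onto $\mathbb C\xi$. A pre-Latin square is a matrix $L\in M_M(\{1,\ldots,N\})$ whose entries are distinct within each row and within each column. $\widetilde S_M$ is the semigroup of partial permutations of $\{1,\ldots,M\}$ (bijections $X\to Y$ with $X,Y\subset\{1,\ldots,M\}$), with product $(\sigma\tau)(j)=\sigma(\tau(j))$ when defined. For $x\in\{1,\ldots,N\}$, $\sigma_x\in\widetilde S_M$ is defined by $\sigma_x(j)=i\iff L_{ij}=x$;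 the semigroup associated to $L$ is the subsemigroup of $\widetilde S_M$ generated by $\sigma_1,\ldots,\sigma_N$, and $C(G)$ has comultiplication $\Delta(f)(\sigma,\tau)=f(\sigma\tau)$. The bialgebra image of $\pi_P$ is the minimal factorization of $\pi_P$ (restricted to the $*$-algebra generated by the $u_{ij}$) as a surjective comultiplication-preserving unital $*$-homomorphism onto a unital $*$-algebra with comultiplication followed by a $*$-homomorphism to $M_N(\mathbb C)$, minimal in the sense that any other such factorization maps uniquely onto it compatibly with the quotient maps. *)

theory Defs
  imports Main "Jordan_Normal_Form.Schur_Decomposition" "Jordan_Normal_Form.DL_Rank"
begin

text \<open>Indices are 1-based: rows/columns of the M x M submagic matrix range over {1..M},
  labels of the pre-Latin square over {1..N}.  Entries of C^N vectors and of
  N x N matrices are indexed 0..N-1 as in Jordan_Normal_Form.\<close>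

definition orth_projection :: "nat \<Rightarrow> complex mat \<Rightarrow> bool" where
  "orth_projection N Q \<longleftrightarrow> Q \<in> carrier_mat N N \<and> Q * Q = Q \<and> mat_adjoint Q = Q"

definition rank_one_projection :: "nat \<Rightarrow> complex mat \<Rightarrow> bool" where
  "rank_one_projection N Q \<longleftrightarrow> orth_projection N Q \<and> vec_space.rank N Q = 1"

definition submagic :: "nat \<Rightarrow> nat \<Rightarrow> (nat \<Rightarrow> nat \<Rightarrow> complex mat) \<Rightarrow> bool" where
  "submagic M N P \<longleftrightarrow>
     (\<forall>i\<in>{1..M}. \<forall>j\<in>{1..M}. orth_projection N (P i j)) \<and>
     (\<forall>i\<in>{1..M}. \<forall>j\<in>{1..M}. \<forall>k\<in>{1..M}. j \<noteq> k \<longrightarrow> P i j * P i k = 0\<^sub>m N N) \<and>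
     (\<forall>i\<in>{1..M}. \<forall>j\<in>{1..M}. \<forall>k\<in>{1..M}. i \<noteq> k \<longrightarrow> P i j * P k j = 0\<^sub>m N N)"

definition Proj :: "nat \<Rightarrow> complex vec \<Rightarrow> complex mat" where
  "Proj N \<xi> = (1 / (\<xi> \<bullet>c \<xi>)) \<cdot>\<^sub>m mat N N (\<lambda>(r, c). \<xi> $ r * cnj (\<xi> $ c))"

definition orthogonal_basis :: "nat \<Rightarrow> (nat \<Rightarrow> complex vec) \<Rightarrow> bool" where
  "orthogonal_basis N \<xi> \<longleftrightarrow>
     (\<forall>x\<in>{1..N}. \<xi> x \<in> carrier_vec N \<and> \<xi> x \<noteq> 0\<^sub>v N) \<and>
     (\<forall>x\<in>{1..N}. \<forall>y\<in>{1..N}. x \<noteq> y \<longrightarrow> \<xi> x \<bullet>c \<xi> y = 0) \<and>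
     (\<forall>v\<in>carrier_vec N. \<exists>c :: nat \<Rightarrow> complex.
         v = vec N (\<lambda>r. \<Sum>x\<in>{1..N}. c x * (\<xi> x $ r)))"

definition pre_latin_square :: "nat \<Rightarrow> nat \<Rightarrow> (nat \<Rightarrow> nat \<Rightarrow> nat) \<Rightarrow> bool" where
  "pre_latin_square M N L \<longleftrightarrow>
     (\<forall>i\<in>{1..M}. \<forall>j\<in>{1..M}. L i j \<in> {1..N}) \<and>
     (\<forall>i\<in>{1..M}. \<forall>j\<in>{1..M}. \<forall>k\<in>{1..M}. j \<noteq> k \<longrightarrow> L i j \<noteq> L i k) \<and>
     (\<forall>i\<in>{1..M}. \<forall>j\<in>{1..M}. \<forall>k\<in>{1..M}. i \<noteq> k \<longrightarrow> L i j \<noteq> L k j)"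

text \<open>A partial permutation of {1..M} is an injective partial map with domain and range in {1..M};
  the product is (sigma tau)(j) = sigma(tau(j)) when defined, i.e. map composition.\<close>
definition partial_perm :: "nat \<Rightarrow> (nat \<rightharpoonup> nat) \<Rightarrow> bool" where
  "partial_perm M \<sigma> \<longleftrightarrow> dom \<sigma> \<subseteq> {1..M} \<and> ran \<sigma> \<subseteq> {1..M} \<and> inj_on \<sigma> (dom \<sigma>)"

text \<open>sigma_x(j) = i iff L_ij = x.\<close>
definition sigma_L :: "nat \<Rightarrow> (nat \<Rightarrow> nat \<Rightarrow> nat) \<Rightarrow> nat \<Rightarrow> (nat \<rightharpoonup> nat)" where
  "sigma_L M L x = (\<lambda>j. if j \<in> {1..M} \<and> (\<exists>i\<in>{1..M}. L i j = x)
                         then Some (THE i. i \<in> {1..M} \<and> L i j = x) else None)"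

inductive_set assoc_semigroup :: "nat \<Rightarrow> nat \<Rightarrow> (nat \<Rightarrow> nat \<Rightarrow> nat) \<Rightarrow> (nat \<rightharpoonup> nat) set"
  for M N L where
  gen: "x \<in> {1..N} \<Longrightarrow> sigma_L M L x \<in> assoc_semigroup M N L"
| mult: "\<sigma> \<in> assoc_semigroup M N L \<Longrightarrow> \<tau> \<in> assoc_semigroup M N L \<Longrightarrow> (\<sigma> \<circ>\<^sub>m \<tau>) \<in> assoc_semigroup M N L"

text \<open>Elements of the free unital *-algebra on self-adjoint generators u_ij (i,j in {1..M}):
  finitely supported coefficient functions on words.  The word [(i1,j1),...,(ik,jk)] stands for
  u_{i1 j1} ... u_{ik jk}; the empty word is the unit.  The *-algebra generated by the u_ij in
  the universal algebra is the quotient of this by an ideal containing the submagic relations.\<close>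
type_synonym word = "(nat \<times> nat) list"
type_synonym falg = "word \<Rightarrow> complex"
type_synonym ftens = "word \<times> word \<Rightarrow> complex"

definition falg_carrier :: "nat \<Rightarrow> falg set" where
  "falg_carrier M = {f. finite {w. f w \<noteq> 0} \<and> (\<forall>w. f w \<noteq> 0 \<longrightarrow> set w \<subseteq> {1..M} \<times> {1..M})}"

definition falg_gen :: "nat \<Rightarrow> nat \<Rightarrow> falg" where
  "falg_gen i j = (\<lambda>w. if w = [(i, j)] then 1 else 0)"

definition falg_add :: "falg \<Rightarrow> falg \<Rightarrow> falg" where
  "falg_add f g = (\<lambda>w. f w + g w)"

definition falg_smult :: "complex \<Rightarrow> falg \<Rightarrow> falg" where
  "falg_smult c f = (\<lambda>w. c * f w)"

definition falg_mult :: "falg \<Rightarrow> falg \<Rightarrow> falg" where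
  "falg_mult f g = (\<lambda>w. \<Sum>k\<in>{0..length w}. f (take k w) * g (drop k w))"

text \<open>Involution: u_ij^* = u_ij, so (u_{w1}...u_{wk})^* = u_{wk}...u_{w1}.\<close>
definition falg_star :: "falg \<Rightarrow> falg" where
  "falg_star f = (\<lambda>w. cnj (f (rev w)))"

definition tens :: "falg \<Rightarrow> falg \<Rightarrow> ftens" where
  "tens f g = (\<lambda>(a, b). f a * g b)"

definition coideal_target :: "nat \<Rightarrow> falg set \<Rightarrow> ftens set" where
  "coideal_target M I = {t. \<exists>n (x :: nat \<Rightarrow> falg) (y :: nat \<Rightarrow> falg).
       (\<forall>k<n. x k \<in> falg_carrier M \<and> y k \<in> falg_carrier M \<and> (x k \<in> I \<or> y k \<in> I)) \<and>
       t = (\<lambda>p. \<Sum>k<n. tens (x k) (y k) p)}"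

text \<open>Comultiplication Delta(u_ij) = sum_l u_il (x) u_lj, extended multiplicatively:
  Delta(u_{i1 j1}...u_{ik jk}) = sum_{l_1..l_k} u_{i1 l1}...u_{ik lk} (x) u_{l1 j1}...u_{lk jk}.
  Hence the coefficient of a (x) b in Delta(f) is f(w) where w_t = (fst a_t, snd b_t),
  provided snd a_t = fst b_t \<in> {1..M} for all t, and 0 otherwise.\<close>
definition falg_comult :: "nat \<Rightarrow> falg \<Rightarrow> ftens" where
  "falg_comult M f = (\<lambda>(a, b).
     if length a = length b \<and> (\<forall>t<length a. snd (a ! t) = fst (b ! t) \<and> snd (a ! t) \<in> {1..M})
     then f (map2 (\<lambda>x y. (fst x, snd y)) a b) else 0)"

definition word_mat :: "nat \<Rightarrow> (nat \<Rightarrow> nat \<Rightarrow> complex mat) \<Rightarrow> word \<Rightarrow> complex mat" where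
  "word_mat N P w = foldr (\<lambda>l acc. P (fst l) (snd l) * acc) w (1\<^sub>m N)"

definition pi_P :: "nat \<Rightarrow> (nat \<Rightarrow> nat \<Rightarrow> complex mat) \<Rightarrow> falg \<Rightarrow> complex mat" where
  "pi_P N P f = mat N N (\<lambda>(r, c). \<Sum>w\<in>{w. f w \<noteq> 0}. f w * (word_mat N P w $$ (r, c)))"

definition chi_word :: "word \<Rightarrow> (nat \<rightharpoonup> nat) \<Rightarrow> complex" where
  "chi_word w \<sigma> = (\<Prod>t<length w. if \<sigma> (snd (w ! t)) = Some (fst (w ! t)) then 1 else 0)"

definition rho :: "falg \<Rightarrow> (nat \<rightharpoonup> nat) \<Rightarrow> complex" where
  "rho f \<sigma> = (\<Sum>w\<in>{w. f w \<noteq> 0}. f w * chi_word w \<sigma>)"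

text \<open>Kernels of factorizations A -> B -> M_N(C) of pi_P through a surjective unital
  comultiplication-preserving *-homomorphism A -> B: *-ideals I of A (A = *-algebra generated by
  submagic u_ij, i.e. ideals of the free algebra containing the submagic relations) which are
  coideals (Delta(I) \<subseteq> I (x) A + A (x) I) and are contained in ker pi_P.\<close>
definition admissible_ideal :: "nat \<Rightarrow> nat \<Rightarrow> (nat \<Rightarrow> nat \<Rightarrow> complex mat) \<Rightarrow> falg set \<Rightarrow> bool" where
  "admissible_ideal M N P I \<longleftrightarrow>
     I \<subseteq> falg_carrier M \<and> (\<lambda>w. 0) \<in> I \<and>
     (\<forall>f\<in>I. \<forall>g\<in>I. falg_add f g \<in> I) \<and>
     (\<forall>c. \<forall>f\<in>I. falg_smult c f \<in> I) \<and>
     (\<forall>f\<in>I. \<forall>g\<in>falg_carrier M. falg_mult f g \<in> I \<and> falg_mult g f \<in> I) \<and>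
     (\<forall>f\<in>I. falg_star f \<in> I) \<and>
     (\<forall>i\<in>{1..M}. \<forall>j\<in>{1..M}.
         falg_add (falg_mult (falg_gen i j) (falg_gen i j)) (falg_smult (-1) (falg_gen i j)) \<in> I) \<and>
     (\<forall>i\<in>{1..M}. \<forall>j\<in>{1..M}. \<forall>k\<in>{1..M}. j \<noteq> k \<longrightarrow> falg_mult (falg_gen i j) (falg_gen i k) \<in> I) \<and>
     (\<forall>i\<in>{1..M}. \<forall>j\<in>{1..M}. \<forall>k\<in>{1..M}. i \<noteq> k \<longrightarrow> falg_mult (falg_gen i j) (falg_gen k j) \<in> I) \<and>
     (\<forall>f\<in>I. falg_comult M f \<in> coideal_target M I) \<and>
     (\<forall>f\<in>I. pi_P N P f = 0\<^sub>m N N)"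

text \<open>The bialgebra image of pi_P is C(G) with u_ij \<mapsto> chi_{sigma(j)=i}:
  rho maps A onto C(G), intertwines Delta with Delta(h)(sigma,tau) = h(sigma tau),
  and its kernel is the largest admissible ideal (i.e. A -> C(G) -> M_N(C) is the minimal
  factorization).\<close>
definition bialgebra_image_is_CG ::
  "nat \<Rightarrow> nat \<Rightarrow> (nat \<Rightarrow> nat \<Rightarrow> complex mat) \<Rightarrow> (nat \<rightharpoonup> nat) set \<Rightarrow> bool" where
  "bialgebra_image_is_CG M N P G \<longleftrightarrow>
     (\<forall>h :: (nat \<rightharpoonup> nat) \<Rightarrow> complex. \<exists>f\<in>falg_carrier M. \<forall>\<sigma>\<in>G. rho f \<sigma> = h \<sigma>) \<and>
     (\<forall>f\<in>falg_carrier M. \<forall>\<sigma>\<in>G. \<forall>\<tau>\<in>G.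
        rho f (\<sigma> \<circ>\<^sub>m \<tau>) =
        (\<Sum>p\<in>{p. falg_comult M f p \<noteq> 0}.
            falg_comult M f p * chi_word (fst p) \<sigma> * chi_word (snd p) \<tau>)) \<and>
     admissible_ideal M N P {f\<in>falg_carrier M. \<forall>\<sigma>\<in>G. rho f \<sigma> = 0} \<and>
     (\<forall>I. admissible_ideal M N P I \<longrightarrow> I \<subseteq> {f\<in>falg_carrier M. \<forall>\<sigma>\<in>G. rho f \<sigma> = 0})"

end

theory Submission
  imports Defs
begin


lemma conj_complex[simp]: "conjugate (z::complex) = cnj z"
  by (simp add: conjugate_complex_def)

lemma cscalar_eq:
  assumes "(\<xi>::complex vec) \<in> carrier_vec N" "\<eta> \<in> carrier_vec N"
  shows "\<xi> \<bullet>c \<eta> = (\<Sum>i<N. \<xi>$i * cnj (\<eta>$i))"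
  using assms unfolding scalar_prod_def by (auto intro!: sum.cong simp: lessThan_atLeast0)

lemma cscalar_cnj:
  assumes "(\<xi>::complex vec) \<in> carrier_vec N" "\<eta> \<in> carrier_vec N"
  shows "\<eta> \<bullet>c \<xi> = cnj (\<xi> \<bullet>c \<eta>)"
  using assms by (simp add: cscalar_eq mult.commute)

lemma cscalar_self_nz:
  assumes "(\<xi>::complex vec) \<in> carrier_vec N" "\<xi> \<noteq> 0\<^sub>v N"
  shows "\<xi> \<bullet>c \<xi> \<noteq> 0"
  using assms conjugate_square_eq_0_vec by blast

lemma Proj_carrier[simp]: "Proj N \<xi> \<in> carrier_mat N N"
  unfolding Proj_def by auto

lemma Proj_dims[simp]: "dim_row (Proj N \<xi>) = N" "dim_col (Proj N \<xi>) = N"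
  unfolding Proj_def by auto

lemma Proj_index:
  assumes "r < N" "c < N"
  shows "Proj N \<xi> $$ (r,c) = \<xi>$r * cnj (\<xi>$c) / (\<xi> \<bullet>c \<xi>)"
  using assms unfolding Proj_def by auto

lemma Proj_mult:
  assumes "(\<xi>::complex vec) \<in> carrier_vec N" "\<eta> \<in> carrier_vec N"
  shows "Proj N \<xi> * Proj N \<eta> =
     mat N N (\<lambda>(r,c). \<xi>$r * cnj (\<eta>$c) * (\<eta> \<bullet>c \<xi>) / ((\<xi> \<bullet>c \<xi>) * (\<eta> \<bullet>c \<eta>)))"
proof (rule eq_matI)
  fix r c assume rc: "r < dim_row (mat N N (\<lambda>(r,c). \<xi>$r * cnj (\<eta>$c) * (\<eta> \<bullet>c \<xi>) / ((\<xi> \<bullet>c \<xi>) * (\<eta> \<bullet>c \<eta>))))"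
     "c < dim_col (mat N N (\<lambda>(r,c). \<xi>$r * cnj (\<eta>$c) * (\<eta> \<bullet>c \<xi>) / ((\<xi> \<bullet>c \<xi>) * (\<eta> \<bullet>c \<eta>))))"
  hence r: "r < N" and c: "c < N" by auto
  have "(Proj N \<xi> * Proj N \<eta>) $$ (r,c) = (\<Sum>k<N. Proj N \<xi> $$ (r,k) * Proj N \<eta> $$ (k,c))"
    using r c by (simp add: scalar_prod_def lessThan_atLeast0 index_mult_mat)
  also have "\<dots> = (\<Sum>k<N. (\<xi>$r * cnj (\<eta>$c) / ((\<xi> \<bullet>c \<xi>) * (\<eta> \<bullet>c \<eta>))) * (\<eta>$k * cnj (\<xi>$k)))"
    using r c by (intro sum.cong, auto simp: Proj_index)
  also have "\<dots> = (\<xi>$r * cnj (\<eta>$c) / ((\<xi> \<bullet>c \<xi>) * (\<eta> \<bullet>c \<eta>))) * (\<eta> \<bullet>c \<xi>)"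
    using assms by (simp add: sum_distrib_left cscalar_eq)
  finally show "(Proj N \<xi> * Proj N \<eta>) $$ (r,c) = mat N N (\<lambda>(r,c). \<xi>$r * cnj (\<eta>$c) * (\<eta> \<bullet>c \<xi>) / ((\<xi> \<bullet>c \<xi>) * (\<eta> \<bullet>c \<eta>))) $$ (r,c)"
    using r c by simp
qed auto

lemma Proj_orth:
  assumes "(\<xi>::complex vec) \<in> carrier_vec N" "\<eta> \<in> carrier_vec N" "\<xi> \<bullet>c \<eta> = 0"
  shows "Proj N \<xi> * Proj N \<eta> = 0\<^sub>m N N"
proof -
  have "\<eta> \<bullet>c \<xi> = 0" using cscalar_cnj[OF assms(1,2)] assms(3) by simp
  show ?thesis unfolding Proj_mult[OF assms(1,2)]
    by (rule eq_matI) (use \<open>\<eta> \<bullet>c \<xi> = 0\<close> in auto)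
qed

lemma Proj_idem:
  assumes "(\<xi>::complex vec) \<in> carrier_vec N" "\<xi> \<noteq> 0\<^sub>v N"
  shows "Proj N \<xi> * Proj N \<xi> = Proj N \<xi>"
proof -
  have nz: "\<xi> \<bullet>c \<xi> \<noteq> 0" using cscalar_self_nz assms by blast
  show ?thesis unfolding Proj_mult[OF assms(1) assms(1)]
    by (rule eq_matI) (use nz in \<open>auto simp: Proj_index\<close>)
qed

lemma Proj_scale:
  assumes "(\<xi>::complex vec) \<in> carrier_vec N" "a \<noteq> 0"
  shows "Proj N (a \<cdot>\<^sub>v \<xi>) = Proj N \<xi>"
proof -
  have "(a \<cdot>\<^sub>v \<xi>) \<bullet>c (a \<cdot>\<^sub>v \<xi>) = (a * cnj a) * (\<xi> \<bullet>c \<xi>)"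
    using assms by (simp add: cscalar_eq sum_distrib_left algebra_simps)
  moreover have "a * cnj a \<noteq> 0" using assms by simp
  ultimately show ?thesis using assms
  proof (intro eq_matI)
    fix i j assume ij: "i < dim_row (Proj N \<xi>)" "j < dim_col (Proj N \<xi>)"
    then have "Proj N (a \<cdot>\<^sub>v \<xi>) $$ (i,j) = (a * cnj a) * (\<xi>$i * cnj (\<xi>$j)) / ((a * cnj a) * (\<xi> \<bullet>c \<xi>))"
      using assms \<open>(a \<cdot>\<^sub>v \<xi>) \<bullet>c (a \<cdot>\<^sub>v \<xi>) = (a * cnj a) * (\<xi> \<bullet>c \<xi>)\<close>
      by (simp add: Proj_index algebra_simps)
    also have "\<dots> = Proj N \<xi> $$ (i,j)" using ij \<open>a * cnj a \<noteq> 0\<close> by (simp add: Proj_index)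
    finally show "Proj N (a \<cdot>\<^sub>v \<xi>) $$ (i,j) = Proj N \<xi> $$ (i,j)" .
  qed auto
qed

lemma Proj_nonzero:
  assumes "(\<xi>::complex vec) \<in> carrier_vec N" "\<xi> \<noteq> 0\<^sub>v N"
  shows "Proj N \<xi> \<noteq> 0\<^sub>m N N"
proof
  assume z: "Proj N \<xi> = 0\<^sub>m N N"
  obtain r where r: "r < N" "\<xi>$r \<noteq> 0" using assms by (metis carrier_vecD eq_vecI index_zero_vec(1) index_zero_vec(2))
  have nz: "\<xi> \<bullet>c \<xi> \<noteq> 0" using cscalar_self_nz assms by blast
  have "Proj N \<xi> $$ (r,r) = 0" using z r by simp
  hence "\<xi>$r * cnj (\<xi>$r) = 0" using r nz by (simp add: Proj_index)
  thus False using r by simp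
qed


lemma rank1_cols:
  assumes Q: "(Q::complex mat) \<in> carrier_mat N N" and r: "vec_space.rank N Q = 1"
  shows "\<exists>v\<in>carrier_vec N. v \<noteq> 0\<^sub>v N \<and> (\<forall>j<N. \<exists>a. col Q j = a \<cdot>\<^sub>v v)"
proof -
  interpret vec_space "TYPE(complex)" N .
  have "\<exists>j<N. col Q j \<noteq> 0\<^sub>v N"
  proof (rule ccontr)
    assume "\<not> ?thesis"
    hence "Q = 0\<^sub>m N N" using Q
      by (intro eq_matI) (auto, metis col_def index_vec index_zero_vec(1) carrier_matD)
    hence "rank Q = 0" using rank_0I by simp
    thus False using r by simp
  qed
  then obtain j0 where j0: "j0 < N" "col Q j0 \<noteq> 0\<^sub>v N" by auto
  define v where "v = col Q j0"
  have v: "v \<in> carrier_vec N" "v \<noteq> 0\<^sub>v N" using j0 Q unfolding v_def by auto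
  have vcols: "v \<in> set (cols Q)" using j0 Q unfolding v_def by (simp add: cols_def)
  have li1: "lin_indpt {v}"
  proof -
    have "lin_indpt {}" by (simp add: lin_dep_def)
    moreover have "v \<notin> span {}" using v span_empty by simp
    ultimately show ?thesis using lin_dep_iff_in_span[of "{}" v] v by auto
  qed
  show ?thesis
  proof (intro bexI conjI allI impI)
    fix j assume j: "j < N"
    define c where "c = col Q j"
    have c: "c \<in> carrier_vec N" "c \<in> set (cols Q)" using j Q unfolding c_def by (auto simp: cols_def)
    have "c \<in> span {v}"
    proof (rule ccontr)
      assume nc: "c \<notin> span {v}"
      have cv: "c \<noteq> v" using nc span_self v by auto
      have "lin_indpt ({v} \<union> {c})" using lin_dep_iff_in_span[of "{v}" c] nc v c li1 cv by auto
      hence "rank Q \<ge> card ({v} \<union> {c})"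
        using rank_ge_card_indpt[OF Q, of "{v} \<union> {c}"] vcols c by auto
      thus False using r cv by simp
    qed
    then obtain a A where aA: "c = lincomb a A" "finite A" "A \<subseteq> {v}" using in_spanE by blast
    show "\<exists>a. col Q j = a \<cdot>\<^sub>v v"
    proof (cases "A = {}")
      case True
      then have "c = 0\<^sub>v N" using aA by simp
      then show ?thesis using v unfolding c_def by (intro exI[of _ 0]) auto
    next
      case False
      then have "A = {v}" using aA by auto
      then have "c = a v \<cdot>\<^sub>v v" using aA v unfolding lincomb_def by simp
      then show ?thesis unfolding c_def by blast
    qed
  qed (use v in auto)
qed


lemma adjoint_index:
  assumes "(Q::complex mat) \<in> carrier_mat N N" "i < N" "j < N"
  shows "mat_adjoint Q $$ (i,j) = cnj (Q $$ (j,i))"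
  using assms unfolding mat_adjoint_def by (simp add: mat_of_rows_def cols_def)

lemma rank1_Proj:
  assumes "rank_one_projection N Q"
  shows "\<exists>v\<in>carrier_vec N. v \<noteq> 0\<^sub>v N \<and> Q = Proj N v"
proof -
  have Q: "Q \<in> carrier_mat N N" and idem: "Q * Q = Q" and adj: "mat_adjoint Q = Q"
    and r: "vec_space.rank N Q = 1"
    using assms unfolding rank_one_projection_def orth_projection_def by auto
  have Qnz: "Q \<noteq> 0\<^sub>m N N"
  proof
    assume "Q = 0\<^sub>m N N"
    then have "vec_space.rank N Q = 0" using vec_space.rank_0I by metis
    then show False using r by simp
  qed
  obtain v where v: "v \<in> carrier_vec N" "v \<noteq> 0\<^sub>v N" and a: "\<forall>j<N. \<exists>a. col Q j = a \<cdot>\<^sub>v v"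
    using rank1_cols[OF Q r] by blast
  obtain a where a: "\<And>j. j < N \<Longrightarrow> col Q j = a j \<cdot>\<^sub>v v" using a by metis
  have Qe: "Q $$ (r,c) = a c * v $ r" if "r < N" "c < N" for r c
  proof -
    have "Q $$ (r,c) = col Q c $ r" using Q that by simp
    also have "\<dots> = a c * v $ r" using a[OF that(2)] v that by simp
    finally show ?thesis .
  qed
  have sa: "Q $$ (r,c) = cnj (Q $$ (c,r))" if "r < N" "c < N" for r c
    using adjoint_index[OF Q that] adj by simp
  obtain r0 where r0: "r0 < N" "v $ r0 \<noteq> 0"
    using v by (metis carrier_vecD eq_vecI index_zero_vec(1) index_zero_vec(2))
  define \<beta> where "\<beta> = cnj (a r0) / v $ r0"
  have Qb: "Q $$ (r,c) = \<beta> * (v $ r * cnj (v $ c))" if "r < N" "c < N" for r c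
  proof -
    have "a c * v $ r0 = cnj (a r0 * v $ c)" using sa[OF r0(1) that(2)] Qe r0 that by simp
    hence "a c = \<beta> * cnj (v $ c)" using r0 unfolding \<beta>_def by (simp add: field_simps)
    thus ?thesis using Qe[OF that] by simp
  qed
  have vv: "v \<bullet>c v \<noteq> 0" using cscalar_self_nz v by blast
  have "Q $$ (r0,r0) = (Q * Q) $$ (r0,r0)" using idem by simp
  also have "\<dots> = (\<Sum>k<N. Q $$ (r0,k) * Q $$ (k,r0))"
    using Q r0 by (simp add: scalar_prod_def lessThan_atLeast0 index_mult_mat)
  also have "\<dots> = (\<Sum>k<N. (\<beta> * \<beta> * (v $ r0 * cnj (v $ r0))) * (v $ k * cnj (v $ k)))"
    using r0 by (intro sum.cong) (auto simp: Qb)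
  also have "\<dots> = (\<beta> * \<beta> * (v $ r0 * cnj (v $ r0))) * (v \<bullet>c v)"
    using v by (simp add: sum_distrib_left cscalar_eq)
  finally have eq: "\<beta> * (v $ r0 * cnj (v $ r0)) = (\<beta> * \<beta> * (v $ r0 * cnj (v $ r0))) * (v \<bullet>c v)"
    using Qb r0 by simp
  have "\<beta> \<noteq> 0"
  proof
    assume "\<beta> = 0"
    have "Q = 0\<^sub>m N N"
    proof (rule eq_matI)
      fix i j assume "i < dim_row (0\<^sub>m N N :: complex mat)" "j < dim_col (0\<^sub>m N N :: complex mat)"
      then show "Q $$ (i,j) = 0\<^sub>m N N $$ (i,j)" using Qb \<open>\<beta> = 0\<close> by simp
    qed (use Q in simp_all)
    thus False using Qnz by simp
  qed
  moreover have "v $ r0 * cnj (v $ r0) \<noteq> 0" using r0 by simp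
  ultimately have "\<beta> * (v \<bullet>c v) = 1" using eq
  proof -
    have "(\<beta> * (v $ r0 * cnj (v $ r0))) * 1 = (\<beta> * (v $ r0 * cnj (v $ r0))) * (\<beta> * (v \<bullet>c v))"
      using eq by (simp add: algebra_simps)
    then show ?thesis using \<open>\<beta> \<noteq> 0\<close> \<open>v $ r0 * cnj (v $ r0) \<noteq> 0\<close>
      by (metis mult_left_cancel no_zero_divisors)
  qed
  hence b: "\<beta> = 1 / (v \<bullet>c v)" using vv by (simp add: field_simps)
  have "Q = Proj N v"
  proof (rule eq_matI)
    fix i j assume "i < dim_row (Proj N v)" "j < dim_col (Proj N v)"
    then show "Q $$ (i,j) = Proj N v $$ (i,j)" by (simp add: Qb Proj_index b)
  qed (use Q in simp_all)
  thus ?thesis using v by blast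
qed


lemma Proj_commute:
  assumes v: "(v::complex vec) \<in> carrier_vec N" "v \<noteq> 0\<^sub>v N"
    and w: "w \<in> carrier_vec N" "w \<noteq> 0\<^sub>v N"
    and comm: "Proj N v * Proj N w = Proj N w * Proj N v"
  shows "Proj N v = Proj N w \<or> v \<bullet>c w = 0"
proof (cases "w \<bullet>c v = 0")
  case True
  then show ?thesis using cscalar_cnj[OF w(1) v(1)] by simp
next
  case False
  define d where "d = w \<bullet>c v"
  have d: "d \<noteq> 0" using False d_def by simp
  have vw: "v \<bullet>c w = cnj d" using cscalar_cnj[OF v(1) w(1)] d_def by simp
  have nv: "v \<bullet>c v \<noteq> 0" using cscalar_self_nz v by blast
  have nw: "w \<bullet>c w \<noteq> 0" using cscalar_self_nz w by blast
  have ent: "v $ r * cnj (w $ c) * d = w $ r * cnj (v $ c) * cnj d" if "r < N" "c < N" for r c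
  proof -
    have "(Proj N v * Proj N w) $$ (r,c) = (Proj N w * Proj N v) $$ (r,c)" using comm by simp
    hence "v $ r * cnj (w $ c) * d / ((v \<bullet>c v) * (w \<bullet>c w)) = w $ r * cnj (v $ c) * cnj d / ((w \<bullet>c w) * (v \<bullet>c v))"
      unfolding Proj_mult[OF v(1) w(1)] Proj_mult[OF w(1) v(1)] using that vw d_def by simp
    thus ?thesis using nv nw by (simp add: field_simps)
  qed
  obtain c0 where c0: "c0 < N" "v $ c0 \<noteq> 0"
    using v by (metis carrier_vecD eq_vecI index_zero_vec(1) index_zero_vec(2))
  define lam where "lam = cnj (w $ c0) * d / (cnj (v $ c0) * cnj d)"
  have wl: "w = lam \<cdot>\<^sub>v v"
  proof (rule eq_vecI)
    fix r assume "r < dim_vec (lam \<cdot>\<^sub>v v)"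
    hence r: "r < N" using v by simp
    have "w $ r = v $ r * cnj (w $ c0) * d / (cnj (v $ c0) * cnj d)"
      using ent[OF r c0(1)] c0 d by (simp add: field_simps)
    thus "w $ r = (lam \<cdot>\<^sub>v v) $ r" using r v unfolding lam_def by simp
  qed (use v w in simp)
  have "lam \<noteq> 0" using wl w v by auto
  then have "Proj N w = Proj N v" using wl Proj_scale[OF v(1)] by simp
  then show ?thesis by simp
qed


lemma corth_li:
  assumes us: "set us \<subseteq> carrier_vec N" and orth: "corthogonal (us :: complex vec list)"
  shows "\<not> module.lin_dep class_ring (module_vec TYPE(complex) N) (set us)"
proof
  interpret vec_space "TYPE(complex)" N .
  assume "lin_dep (set us)"
  then obtain A a v where A: "finite A" "A \<subseteq> set us" "lincomb a A = 0\<^sub>v N" "v \<in> A" "a v \<noteq> 0"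
    unfolding lin_dep_def by auto
  have vc: "v \<in> carrier_vec N" using A us by auto
  have cvc: "conjugate v \<in> carrier_vec N" using vc by simp
  have Ac: "(\<lambda>u. a u \<cdot>\<^sub>v u) \<in> A \<rightarrow> carrier_vec N" using A us by auto
  have "0 = lincomb a A \<bullet> conjugate v" using A(3) cvc by simp
  also have "\<dots> = (\<Sum>u\<in>A. (a u \<cdot>\<^sub>v u) \<bullet> conjugate v)"
    unfolding lincomb_def using finsum_scalar_prod_sum[OF Ac cvc] by simp
  also have "\<dots> = (\<Sum>u\<in>A. a u * (u \<bullet>c v))"
    using A us cvc by (intro sum.cong) auto
  also have "\<dots> = a v * (v \<bullet>c v) + (\<Sum>u\<in>A-{v}. a u * (u \<bullet>c v))"
    using A by (simp add: sum.remove)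
  also have "(\<Sum>u\<in>A-{v}. a u * (u \<bullet>c v)) = 0"
  proof (rule sum.neutral, rule ballI)
    fix u assume u: "u \<in> A - {v}"
    obtain i where i: "i < length us" "us ! i = u" using u A by (metis DiffD1 in_set_conv_nth subsetD)
    obtain j where j: "j < length us" "us ! j = v" using A by (metis in_set_conv_nth subsetD)
    have "i \<noteq> j" using i j u by auto
    hence "u \<bullet>c v = 0" using corthogonalD[OF orth i(1) j(1)] i j by simp
    thus "a u * (u \<bullet>c v) = 0" by simp
  qed
  finally have "a v * (v \<bullet>c v) = 0" by simp
  moreover have "v \<bullet>c v \<noteq> 0"
  proof -
    obtain j where j: "j < length us" "us ! j = v" using A by (metis in_set_conv_nth subsetD)
    show ?thesis using corthogonalD[OF orth j(1) j(1)] j by simp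
  qed
  ultimately show False using A(5) by simp
qed

lemma corth_len:
  assumes us: "set us \<subseteq> carrier_vec N" and orth: "corthogonal (us :: complex vec list)"
  shows "length us \<le> N"
proof -
  interpret vec_space "TYPE(complex)" N .
  have "card (set us) \<le> dim" using li_le_dim(2)[OF fin_dim us corth_li[OF us orth]] .
  moreover have "card (set us) = length us" using corthogonal_distinct[OF orth] distinct_card by blast
  ultimately show ?thesis using dim_is_n by simp
qed

lemma corth_extend1:
  assumes us: "set us \<subseteq> carrier_vec N" and orth: "corthogonal (us :: complex vec list)"
    and len: "length us < N"
  shows "\<exists>w\<in>carrier_vec N. corthogonal (w # us)"
proof -
  interpret cof_vec_space N "TYPE(complex)" .
  have li: "lin_indpt (set us)" using corth_li[OF us orth] .
  have dist: "distinct us" using corthogonal_distinct[OF orth] .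
  have "span (set us) \<noteq> carrier_vec N"
  proof
    assume sp: "span (set us) = carrier_vec N"
    have "basis (set us)" unfolding basis_def using li sp us by simp
    hence "dim = card (set us)" using dim_basis by blast
    thus False using dim_is_n distinct_card[OF dist] len by simp
  qed
  moreover have "span (set us) \<subseteq> carrier_vec N" using span_closed[OF us] by auto
  ultimately obtain w where w: "w \<in> carrier_vec N" "w \<notin> span (set us)" by auto
  show ?thesis
    using adjust_orthogonal[OF us orth w] adjuster_carrier[OF w(1) us dist] w by auto
qed

lemma corth_complete:
  assumes us: "set us \<subseteq> carrier_vec N" and orth: "corthogonal (us :: complex vec list)"
  shows "\<exists>nw. set nw \<subseteq> carrier_vec N \<and> corthogonal (nw @ us) \<and> length (nw @ us) = N"
  using us orth
proof (induction "N - length us" arbitrary: us)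
  case 0
  then show ?case using corth_len[OF 0(2,3)] by (intro exI[of _ "[]"]) auto
next
  case (Suc k)
  have "length us < N" using Suc(2) by simp
  then obtain w where w: "w \<in> carrier_vec N" "corthogonal (w # us)"
    using corth_extend1[OF Suc(3,4)] by blast
  have "k = N - length (w # us)" using Suc(2) by simp
  then obtain nw where "set nw \<subseteq> carrier_vec N" "corthogonal (nw @ w # us)" "length (nw @ w # us) = N"
    using Suc(1)[of "w # us"] w Suc(3) by auto
  then show ?case using w by (intro exI[of _ "nw @ [w]"]) auto
qed


lemma corth_span:
  assumes ws: "set ws \<subseteq> carrier_vec N" and orth: "corthogonal (ws :: complex vec list)"
    and len: "length ws = N" and v: "v \<in> carrier_vec N"
  shows "v = vec N (\<lambda>r. \<Sum>i<N. ((v \<bullet>c ws!i) / (ws!i \<bullet>c ws!i)) * (ws!i $ r))"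
proof -
  define cf where "cf i = (v \<bullet>c ws!i) / (ws!i \<bullet>c ws!i)" for i
  define s where "s = vec N (\<lambda>r. \<Sum>i<N. cf i * (ws!i $ r))"
  define r where "r = v - s"
  have wc: "ws!i \<in> carrier_vec N" if "i < N" for i using ws len that by auto
  have nz: "ws!i \<bullet>c ws!i \<noteq> 0" if "i < N" for i using corthogonalD[OF orth, of i i] len that by simp
  have orthij: "ws!i \<bullet>c ws!j = 0" if "i < N" "j < N" "i \<noteq> j" for i j
    using corthogonalD[OF orth, of i j] len that by simp
  have sc: "s \<in> carrier_vec N" unfolding s_def by simp
  have rc: "r \<in> carrier_vec N" unfolding r_def using v sc by simp
  have sj: "s \<bullet>c ws!j = v \<bullet>c ws!j" if j: "j < N" for j
  proof -
    have "s \<bullet>c ws!j = (\<Sum>k<N. (\<Sum>i<N. cf i * (ws!i $ k)) * cnj (ws!j $ k))"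
      using cscalar_eq[OF sc wc[OF j]] unfolding s_def by simp
    also have "\<dots> = (\<Sum>k<N. \<Sum>i<N. cf i * (ws!i $ k * cnj (ws!j $ k)))"
      by (simp add: sum_distrib_right mult.assoc)
    also have "\<dots> = (\<Sum>i<N. \<Sum>k<N. cf i * (ws!i $ k * cnj (ws!j $ k)))"
      by (rule sum.swap)
    also have "\<dots> = (\<Sum>i<N. cf i * (\<Sum>k<N. ws!i $ k * cnj (ws!j $ k)))"
      by (simp add: sum_distrib_left)
    also have "\<dots> = (\<Sum>i<N. cf i * (ws!i \<bullet>c ws!j))"
      by (intro sum.cong refl) (simp add: cscalar_eq[OF wc wc[OF j]])
    also have "\<dots> = cf j * (ws!j \<bullet>c ws!j)"
    proof (subst sum.remove[of _ j])
      show "cf j * (ws ! j \<bullet>c ws ! j) + (\<Sum>i\<in>{..<N} - {j}. cf i * (ws ! i \<bullet>c ws ! j)) = cf j * (ws ! j \<bullet>c ws ! j)"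
        using orthij j by (subst sum.neutral) auto
    qed (use j in auto)
    also have "\<dots> = v \<bullet>c ws!j" unfolding cf_def using nz[OF j] by simp
    finally show ?thesis .
  qed
  have rj: "r \<bullet>c ws!j = 0" if j: "j < N" for j
  proof -
    have "r \<bullet>c ws!j = v \<bullet>c ws!j - s \<bullet>c ws!j"
    proof -
      have rc': "v - s \<in> carrier_vec N" using v sc by simp
      have "(v - s) \<bullet>c ws!j = (\<Sum>i<N. (v - s) $ i * cnj (ws!j $ i))" using cscalar_eq[OF rc' wc[OF j]] .
      also have "\<dots> = (\<Sum>i<N. v $ i * cnj (ws!j $ i) - s $ i * cnj (ws!j $ i))"
        using v sc by (intro sum.cong) (auto simp: algebra_simps)
      also have "\<dots> = v \<bullet>c ws!j - s \<bullet>c ws!j"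
        by (simp add: sum_subtractf cscalar_eq[OF v wc[OF j]] cscalar_eq[OF sc wc[OF j]])
      finally show ?thesis unfolding r_def .
    qed
    thus ?thesis using sj[OF j] by simp
  qed
  have jr: "ws!j \<bullet>c r = 0" if j: "j < N" for j
    using cscalar_cnj[OF rc wc[OF j]] rj[OF j] by simp
  have "r = 0\<^sub>v N"
  proof (rule ccontr)
    assume "r \<noteq> 0\<^sub>v N"
    hence rr: "r \<bullet>c r \<noteq> 0" using cscalar_self_nz rc by blast
    have "corthogonal (r # ws)"
    proof (rule corthogonalI)
      fix i j assume i: "i < length (r # ws)" and j: "j < length (r # ws)"
      show "((r # ws) ! i \<bullet>c (r # ws) ! j = 0) = (i \<noteq> j)"
      proof (cases i)
        case 0
        then show ?thesis using rr rj j len by (cases j) auto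
      next
        case (Suc i')
        then show ?thesis
          using jr i j len corthogonalD[OF orth, of i'] by (cases j) auto
      qed
    qed
    hence "length (r # ws) \<le> N" using corth_len rc ws by (metis insert_subset list.simps(15))
    thus False using len by simp
  qed
  have "v = s"
  proof (rule eq_vecI)
    fix i assume "i < dim_vec s"
    hence i: "i < N" using sc by simp
    have "r $ i = 0" using \<open>r = 0\<^sub>v N\<close> i by simp
    thus "v $ i = s $ i" unfolding r_def using i v sc by simp
  qed (use v sc in simp)
  thus ?thesis unfolding s_def cf_def by simp
qed

lemma corth_basis:
  assumes ws: "set ws \<subseteq> carrier_vec N" and orth: "corthogonal (ws :: complex vec list)"
    and len: "length ws = N"
  shows "orthogonal_basis N (\<lambda>x. ws ! (x - 1))"
  unfolding orthogonal_basis_def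
proof (intro conjI ballI impI)
  fix x assume x: "x \<in> {1..N}"
  hence i: "x - 1 < length ws" using len by auto
  show "ws ! (x - 1) \<in> carrier_vec N" using ws i by auto
  show "ws ! (x - 1) \<noteq> 0\<^sub>v N"
  proof
    assume "ws ! (x - 1) = 0\<^sub>v N"
    hence "ws ! (x - 1) \<bullet>c ws ! (x - 1) = 0" by simp
    thus False using corthogonalD[OF orth i i] by simp
  qed
next
  fix x y assume x: "x \<in> {1..N}" and y: "y \<in> {1..N}" and xy: "x \<noteq> y"
  hence "x - 1 < length ws" "y - 1 < length ws" "x - 1 \<noteq> y - 1" using len by auto
  thus "ws ! (x - 1) \<bullet>c ws ! (y - 1) = 0" using corthogonalD[OF orth] by blast
next
  fix v :: "complex vec" assume v: "v \<in> carrier_vec N"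
  define cf where "cf i = (v \<bullet>c ws!i) / (ws!i \<bullet>c ws!i)" for i
  have "v = vec N (\<lambda>r. \<Sum>i<N. cf i * (ws!i $ r))" using corth_span[OF ws orth len v] unfolding cf_def .
  also have "\<dots> = vec N (\<lambda>r. \<Sum>x\<in>{1..N}. cf (x - 1) * (ws ! (x - 1) $ r))"
  proof -
    have "(\<Sum>i<N. g i) = (\<Sum>x\<in>{1..N}. g (x - 1))" for g :: "nat \<Rightarrow> complex"
      by (simp add: sum.atLeast1_atMost_eq)
    thus ?thesis by simp
  qed
  finally show "\<exists>c. v = vec N (\<lambda>r. \<Sum>x\<in>{1..N}. c x * (ws ! (x - 1) $ r))"
    by (intro exI[of _ "\<lambda>x. cf (x - 1)"])
qed


lemma part_impl_commute:
  assumes L: "pre_latin_square M N L" and xi: "orthogonal_basis N \<xi>"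
    and P: "\<forall>i\<in>{1..M}. \<forall>j\<in>{1..M}. P i j = Proj N (\<xi> (L i j))"
  shows "\<forall>i\<in>{1..M}. \<forall>j\<in>{1..M}. \<forall>k\<in>{1..M}. \<forall>l\<in>{1..M}. P i j * P k l = P k l * P i j"
proof (intro ballI)
  fix i j k l assume ij: "i \<in> {1..M}" "j \<in> {1..M}" and kl: "k \<in> {1..M}" "l \<in> {1..M}"
  have x: "L i j \<in> {1..N}" and y: "L k l \<in> {1..N}" using L ij kl unfolding pre_latin_square_def by auto
  have xc: "\<xi> (L i j) \<in> carrier_vec N" and yc: "\<xi> (L k l) \<in> carrier_vec N"
    using xi x y unfolding orthogonal_basis_def by auto
  show "P i j * P k l = P k l * P i j"
  proof (cases "L i j = L k l")
    case True
    then show ?thesis using P ij kl by simp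
  next
    case False
    have o1: "\<xi> (L i j) \<bullet>c \<xi> (L k l) = 0" and o2: "\<xi> (L k l) \<bullet>c \<xi> (L i j) = 0"
      using xi x y False unfolding orthogonal_basis_def by auto
    show ?thesis using P ij kl Proj_orth[OF xc yc o1] Proj_orth[OF yc xc o2] by simp
  qed
qed

lemma commute_impl_part:
  assumes sub: "submagic M N P"
    and r1: "\<forall>i\<in>{1..M}. \<forall>j\<in>{1..M}. rank_one_projection N (P i j)"
    and comm: "\<forall>i\<in>{1..M}. \<forall>j\<in>{1..M}. \<forall>k\<in>{1..M}. \<forall>l\<in>{1..M}. P i j * P k l = P k l * P i j"
  shows "\<exists>L \<xi>. pre_latin_square M N L \<and> orthogonal_basis N \<xi> \<and>
                   (\<forall>i\<in>{1..M}. \<forall>j\<in>{1..M}. P i j = Proj N (\<xi> (L i j)))"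
proof -
  define S where "S = {P i j | i j. i \<in> {1..M} \<and> j \<in> {1..M}}"
  have finS: "finite S" unfolding S_def
  proof -
    have "{P i j | i j. i \<in> {1..M} \<and> j \<in> {1..M}} = (\<lambda>(i,j). P i j) ` ({1..M} \<times> {1..M})" by (auto; blast)
    thus "finite {P i j | i j. i \<in> {1..M} \<and> j \<in> {1..M}}" by simp
  qed
  obtain Ps where Ps: "distinct Ps" "set Ps = S" using finite_distinct_list[OF finS] by metis
  define rep where "rep Q = (SOME v. v \<in> carrier_vec N \<and> v \<noteq> 0\<^sub>v N \<and> Q = Proj N v)" for Q
  have rep: "rep Q \<in> carrier_vec N \<and> rep Q \<noteq> 0\<^sub>v N \<and> Q = Proj N (rep Q)" if QS: "Q \<in> S" for Q
  proof -
    obtain i j where "i \<in> {1..M}" "j \<in> {1..M}" "Q = P i j" using QS unfolding S_def by auto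
    hence "\<exists>v\<in>carrier_vec N. v \<noteq> 0\<^sub>v N \<and> Q = Proj N v" using rank1_Proj r1 by simp
    thus ?thesis unfolding rep_def by (rule someI_ex[of "\<lambda>v. v \<in> carrier_vec N \<and> v \<noteq> 0\<^sub>v N \<and> Q = Proj N v", OF bexE]) auto
  qed
  have commS: "Q1 * Q2 = Q2 * Q1" if "Q1 \<in> S" "Q2 \<in> S" for Q1 Q2
    using that comm unfolding S_def by auto
  define us where "us = map rep Ps"
  have usc: "set us \<subseteq> carrier_vec N" unfolding us_def using rep Ps by auto
  have orth: "corthogonal us"
  proof (rule corthogonalI)
    fix a b assume a: "a < length us" and b: "b < length us"
    have a': "a < length Ps" and b': "b < length Ps" using a b unfolding us_def by auto
    have PaS: "Ps ! a \<in> S" and PbS: "Ps ! b \<in> S" using a' b' Ps by auto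
    note ra = rep[OF PaS] and rb = rep[OF PbS]
    show "(us ! a \<bullet>c us ! b = 0) = (a \<noteq> b)"
    proof (cases "a = b")
      case True
      have "rep (Ps!a) \<bullet>c rep (Ps!a) \<noteq> 0" using cscalar_self_nz[of "rep (Ps!a)" N] ra by blast
      then show ?thesis using True a' unfolding us_def by simp
    next
      case False
      have ne: "Ps ! a \<noteq> Ps ! b" using False Ps(1) a' b' by (simp add: nth_eq_iff_index_eq)
      have "Proj N (rep (Ps!a)) * Proj N (rep (Ps!b)) = Proj N (rep (Ps!b)) * Proj N (rep (Ps!a))"
        using commS[OF PaS PbS] ra rb by simp
      hence "Proj N (rep (Ps!a)) = Proj N (rep (Ps!b)) \<or> rep (Ps!a) \<bullet>c rep (Ps!b) = 0"
        using Proj_commute ra rb by blast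
      then show ?thesis using False ne ra rb a' b' unfolding us_def by auto
    qed
  qed
  obtain nw where nw: "set nw \<subseteq> carrier_vec N" "corthogonal (nw @ us)" "length (nw @ us) = N"
    using corth_complete[OF usc orth] by blast
  define ws where "ws = nw @ us"
  have wsc: "set ws \<subseteq> carrier_vec N" using nw usc unfolding ws_def by auto
  define idx where "idx Q = (SOME a. a < length Ps \<and> Ps ! a = Q)" for Q
  have idx: "idx Q < length Ps \<and> Ps ! idx Q = Q" if "Q \<in> S" for Q
  proof -
    have "\<exists>a. a < length Ps \<and> Ps ! a = Q" using that Ps by (metis in_set_conv_nth)
    thus ?thesis unfolding idx_def by (rule someI_ex)
  qed
  define L where "L i j = length nw + idx (P i j) + 1" for i j
  define \<xi> where "\<xi> x = ws ! (x - 1)" for x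
  have PS: "P i j \<in> S" if "i \<in> {1..M}" "j \<in> {1..M}" for i j using that unfolding S_def by auto
  have lenus: "length us = length Ps" unfolding us_def by simp
  have Lr: "L i j \<in> {1..N}" if "i \<in> {1..M}" "j \<in> {1..M}" for i j
    using idx[OF PS[OF that]] nw(3) lenus unfolding L_def by auto
  have Pnz: "P i j * P i j \<noteq> 0\<^sub>m N N" if "i \<in> {1..M}" "j \<in> {1..M}" for i j
  proof -
    note rr = rep[OF PS[OF that]]
    have "P i j * P i j = P i j" using r1 that unfolding rank_one_projection_def orth_projection_def by auto
    moreover have "P i j \<noteq> 0\<^sub>m N N" using Proj_nonzero[of "rep (P i j)" N] rr by metis
    ultimately show ?thesis by simp
  qed
  have Linj: "L i j \<noteq> L k l" if "i \<in> {1..M}" "j \<in> {1..M}" "k \<in> {1..M}" "l \<in> {1..M}"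
     "P i j \<noteq> P k l" for i j k l
  proof
    assume "L i j = L k l"
    hence "idx (P i j) = idx (P k l)" unfolding L_def by simp
    thus False using idx[OF PS[OF that(1,2)]] idx[OF PS[OF that(3,4)]] that(5) by metis
  qed
  have "pre_latin_square M N L"
    unfolding pre_latin_square_def
  proof (intro conjI ballI impI)
    fix i j assume "i \<in> {1..M}" "j \<in> {1..M}" thus "L i j \<in> {1..N}" by (rule Lr)
  next
    fix i j k assume ijk: "i \<in> {1..M}" "j \<in> {1..M}" "k \<in> {1..M}" "j \<noteq> k"
    have "P i j * P i k = 0\<^sub>m N N" using sub ijk unfolding submagic_def by blast
    hence "P i j \<noteq> P i k" using Pnz ijk by metis
    thus "L i j \<noteq> L i k" using Linj ijk by blast
  next
    fix i j k assume ijk: "i \<in> {1..M}" "j \<in> {1..M}" "k \<in> {1..M}" "i \<noteq> k"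
    have "P i j * P k j = 0\<^sub>m N N" using sub ijk unfolding submagic_def by blast
    hence "P i j \<noteq> P k j" using Pnz ijk by metis
    thus "L i j \<noteq> L k j" using Linj ijk by blast
  qed
  moreover have "orthogonal_basis N \<xi>"
    unfolding \<xi>_def using corth_basis[OF wsc] nw unfolding ws_def by blast
  moreover have "\<forall>i\<in>{1..M}. \<forall>j\<in>{1..M}. P i j = Proj N (\<xi> (L i j))"
  proof (intro ballI)
    fix i j assume ij: "i \<in> {1..M}" "j \<in> {1..M}"
    note ix = idx[OF PS[OF ij]]
    have "\<xi> (L i j) = ws ! (length nw + idx (P i j))" unfolding \<xi>_def L_def by simp
    also have "\<dots> = us ! idx (P i j)" unfolding ws_def by (simp add: nth_append)
    also have "\<dots> = rep (P i j)" unfolding us_def using ix by simp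
    finally show "P i j = Proj N (\<xi> (L i j))" using rep[OF PS[OF ij]] by simp
  qed
  ultimately show ?thesis by blast
qed


abbreviation supp :: "falg \<Rightarrow> word set" where "supp f \<equiv> {w. f w \<noteq> 0}"

definition ind :: "(nat \<rightharpoonup> nat) \<Rightarrow> nat \<times> nat \<Rightarrow> complex" where
  "ind \<sigma> p = (if \<sigma> (snd p) = Some (fst p) then 1 else 0)"

lemma chi_word_list: "chi_word w \<sigma> = prod_list (map (ind \<sigma>) w)"
  unfolding chi_word_def ind_def prod.list_conv_set_nth by (simp add: lessThan_atLeast0)

lemma chi_Nil[simp]: "chi_word [] \<sigma> = 1" by (simp add: chi_word_list)
lemma chi_Cons[simp]: "chi_word (p # w) \<sigma> = ind \<sigma> p * chi_word w \<sigma>" by (simp add: chi_word_list)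
lemma chi_append: "chi_word (u @ v) \<sigma> = chi_word u \<sigma> * chi_word v \<sigma>" by (simp add: chi_word_list)
lemma chi_rev: "chi_word (rev u) \<sigma> = chi_word u \<sigma>" by (simp add: chi_word_list rev_map[symmetric] prod_list.rev)

lemma ind_01: "ind \<sigma> p = 0 \<or> ind \<sigma> p = 1" by (simp add: ind_def)
lemma chi_01: "chi_word w \<sigma> = 0 \<or> chi_word w \<sigma> = 1"
  by (induction w) (auto simp: ind_def)
lemma chi_cnj[simp]: "cnj (chi_word w \<sigma>) = chi_word w \<sigma>"
  using chi_01[of w \<sigma>] by auto
lemma chi_sq: "chi_word w \<sigma> * chi_word w \<sigma> = chi_word w \<sigma>"
  using chi_01[of w \<sigma>] by auto

lemma carrierD: "f \<in> falg_carrier M \<Longrightarrow> finite (supp f)"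
  "f \<in> falg_carrier M \<Longrightarrow> f w \<noteq> 0 \<Longrightarrow> set w \<subseteq> {1..M} \<times> {1..M}"
  unfolding falg_carrier_def by auto

lemma rho_sup:
  assumes "finite S" "supp f \<subseteq> S"
  shows "rho f \<sigma> = (\<Sum>w\<in>S. f w * chi_word w \<sigma>)"
  unfolding rho_def using assms by (intro sum.mono_neutral_left) auto

lemma supp_sum_sub: "supp (\<lambda>w. \<Sum>i\<in>I. g i w) \<subseteq> (\<Union>i\<in>I. supp (g i))"
proof
  fix w assume "w \<in> supp (\<lambda>w. \<Sum>i\<in>I. g i w)"
  hence "(\<Sum>i\<in>I. g i w) \<noteq> 0" by simp
  then obtain i where "i \<in> I" "g i w \<noteq> 0" by (meson sum.neutral)
  thus "w \<in> (\<Union>i\<in>I. supp (g i))" by auto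
qed

lemma rho_sum:
  assumes "finite I" "\<And>i. i \<in> I \<Longrightarrow> finite (supp (g i))"
  shows "rho (\<lambda>w. \<Sum>i\<in>I. g i w) \<sigma> = (\<Sum>i\<in>I. rho (g i) \<sigma>)"
proof -
  define S where "S = (\<Union>i\<in>I. supp (g i))"
  have fS: "finite S" unfolding S_def using assms by auto
  have sub: "supp (\<lambda>w. \<Sum>i\<in>I. g i w) \<subseteq> S" unfolding S_def by (rule supp_sum_sub)
  have "rho (\<lambda>w. \<Sum>i\<in>I. g i w) \<sigma> = (\<Sum>w\<in>S. (\<Sum>i\<in>I. g i w) * chi_word w \<sigma>)"
    by (rule rho_sup[OF fS sub])
  also have "\<dots> = (\<Sum>w\<in>S. \<Sum>i\<in>I. g i w * chi_word w \<sigma>)"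
    by (simp add: sum_distrib_right)
  also have "\<dots> = (\<Sum>i\<in>I. \<Sum>w\<in>S. g i w * chi_word w \<sigma>)"
    by (rule sum.swap)
  also have "\<dots> = (\<Sum>i\<in>I. rho (g i) \<sigma>)"
  proof (rule sum.cong[OF refl])
    fix i assume i: "i \<in> I"
    have "supp (g i) \<subseteq> S" unfolding S_def using i by blast
    thus "(\<Sum>w\<in>S. g i w * chi_word w \<sigma>) = rho (g i) \<sigma>" using rho_sup[OF fS] by metis
  qed
  finally show ?thesis .
qed

lemma supp_sum_finite:
  assumes "finite I" "\<And>i. i \<in> I \<Longrightarrow> finite (supp (g i))"
  shows "finite (supp (\<lambda>w. \<Sum>i\<in>I. g i w))"
  using supp_sum_sub[of g I] assms by (meson finite_UN_I finite_subset)

lemma carrier_sum: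
  assumes "finite I" "\<And>i. i \<in> I \<Longrightarrow> g i \<in> falg_carrier M"
  shows "(\<lambda>w. \<Sum>i\<in>I. g i w) \<in> falg_carrier M"
  unfolding falg_carrier_def
proof (intro CollectI conjI allI impI)
  show "finite (supp (\<lambda>w. \<Sum>i\<in>I. g i w))"
    using supp_sum_finite[OF assms(1)] assms(2) carrierD(1) by blast
  fix w assume "(\<Sum>i\<in>I. g i w) \<noteq> 0"
  then obtain i where "i \<in> I" "g i w \<noteq> 0" by (meson sum.neutral)
  thus "set w \<subseteq> {1..M} \<times> {1..M}" using assms(2) carrierD(2) by blast
qed

definition delta :: "word \<Rightarrow> falg" where "delta a = (\<lambda>w. if w = a then 1 else 0)"

lemma rho_delta: "rho (delta a) \<sigma> = chi_word a \<sigma>"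
  using rho_sup[of "{a}" "delta a"] by (auto simp: delta_def)

lemma delta_carrier: "set a \<subseteq> {1..M} \<times> {1..M} \<Longrightarrow> delta a \<in> falg_carrier M"
  unfolding falg_carrier_def delta_def by auto

lemma rho_add: "f \<in> falg_carrier M \<Longrightarrow> g \<in> falg_carrier M \<Longrightarrow> rho (falg_add f g) \<sigma> = rho f \<sigma> + rho g \<sigma>"
proof -
  assume f: "f \<in> falg_carrier M" and g: "g \<in> falg_carrier M"
  define S where "S = supp f \<union> supp g"
  have fS: "finite S" unfolding S_def using f g carrierD by auto
  have sub: "supp (falg_add f g) \<subseteq> S" unfolding S_def falg_add_def by auto
  have "rho (falg_add f g) \<sigma> = (\<Sum>w\<in>S. (f w + g w) * chi_word w \<sigma>)"
    using rho_sup[OF fS sub] unfolding falg_add_def .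
  also have "\<dots> = rho f \<sigma> + rho g \<sigma>"
    using rho_sup[OF fS, of f] rho_sup[OF fS, of g] unfolding S_def by (simp add: distrib_right sum.distrib)
  finally show ?thesis .
qed

lemma rho_smult: "f \<in> falg_carrier M \<Longrightarrow> rho (falg_smult c f) \<sigma> = c * rho f \<sigma>"
proof -
  assume f: "f \<in> falg_carrier M"
  have fS: "finite (supp f)" using f carrierD by auto
  have sub: "supp (falg_smult c f) \<subseteq> supp f" unfolding falg_smult_def by auto
  have "rho (falg_smult c f) \<sigma> = (\<Sum>w\<in>supp f. (c * f w) * chi_word w \<sigma>)"
    using rho_sup[OF fS sub] unfolding falg_smult_def .
  also have "\<dots> = c * rho f \<sigma>"
    using rho_sup[OF fS, of f] by (simp add: sum_distrib_left mult.assoc)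
  finally show ?thesis .
qed

lemma add_carrier: "f \<in> falg_carrier M \<Longrightarrow> g \<in> falg_carrier M \<Longrightarrow> falg_add f g \<in> falg_carrier M"
proof -
  assume f: "f \<in> falg_carrier M" and g: "g \<in> falg_carrier M"
  have "supp (falg_add f g) \<subseteq> supp f \<union> supp g" unfolding falg_add_def by auto
  thus ?thesis using f g unfolding falg_carrier_def falg_add_def
    by (auto intro: finite_subset)
qed

lemma smult_carrier: "f \<in> falg_carrier M \<Longrightarrow> falg_smult c f \<in> falg_carrier M"
proof -
  assume f: "f \<in> falg_carrier M"
  have "supp (falg_smult c f) \<subseteq> supp f" unfolding falg_smult_def by auto
  thus ?thesis using f unfolding falg_carrier_def falg_smult_def
    by (auto intro: finite_subset)
qed

lemma star_carrier: "f \<in> falg_carrier M \<Longrightarrow> falg_star f \<in> falg_carrier M"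
proof -
  assume f: "f \<in> falg_carrier M"
  have sp: "supp (falg_star f) = rev ` supp f" unfolding falg_star_def
    by (auto simp: image_iff) (metis rev_rev_ident)
  show ?thesis unfolding falg_carrier_def
  proof (intro CollectI conjI allI impI)
    show "finite (supp (falg_star f))" using sp f carrierD(1) by auto
    fix w assume "falg_star f w \<noteq> 0"
    hence "f (rev w) \<noteq> 0" unfolding falg_star_def by auto
    hence "set (rev w) \<subseteq> {1..M} \<times> {1..M}" using f carrierD(2) by blast
    thus "set w \<subseteq> {1..M} \<times> {1..M}" by simp
  qed
qed

lemma rho_star: "f \<in> falg_carrier M \<Longrightarrow> rho (falg_star f) \<sigma> = cnj (rho f \<sigma>)"
proof -
  assume f: "f \<in> falg_carrier M"
  have fS: "finite (supp f)" using f carrierD by auto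
  have sp: "supp (falg_star f) = rev ` supp f" unfolding falg_star_def
    by (auto simp: image_iff) (metis rev_rev_ident)
  have "rho (falg_star f) \<sigma> = (\<Sum>w\<in>rev ` supp f. cnj (f (rev w)) * chi_word w \<sigma>)"
    using rho_sup[of "rev ` supp f" "falg_star f"] fS sp unfolding falg_star_def by auto
  also have "\<dots> = (\<Sum>w\<in>supp f. cnj (f w) * chi_word w \<sigma>)"
    by (subst sum.reindex) (auto simp: chi_rev)
  also have "\<dots> = cnj (rho f \<sigma>)" using rho_sup[OF fS, of f] by simp
  finally show ?thesis .
qed

lemma rho_zero: "rho (\<lambda>w. 0) \<sigma> = 0" unfolding rho_def by simp
lemma zero_carrier: "(\<lambda>w. 0) \<in> falg_carrier M" unfolding falg_carrier_def by simp


lemma splits_eq: "{p. fst p @ snd p = w} = (\<lambda>k. (take k w, drop k w)) ` {0..length w}"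
proof (rule Set.set_eqI)
  fix p
  show "p \<in> {p. fst p @ snd p = w} \<longleftrightarrow> p \<in> (\<lambda>k. (take k w, drop k w)) ` {0..length w}"
  proof
  assume "p \<in> {p. fst p @ snd p = w}"
  hence "fst p @ snd p = w" by simp
  hence "p = (take (length (fst p)) w, drop (length (fst p)) w)" "length (fst p) \<in> {0..length w}"
    by (auto simp: prod_eq_iff)
  thus "p \<in> (\<lambda>k. (take k w, drop k w)) ` {0..length w}" by blast
  qed auto
qed

lemma mult_formula:
  assumes f: "finite (supp f)" and g: "finite (supp g)"
  shows "falg_mult f g w = (\<Sum>p\<in>supp f \<times> supp g. f (fst p) * g (snd p) * (if w = fst p @ snd p then 1 else 0))"
proof -
  define SP where "SP = {p. fst p @ snd p = w}"
  define h where "h p = f (fst p) * g (snd p)" for p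
  have fSP: "finite SP" unfolding SP_def splits_eq by simp
  have "(\<Sum>p\<in>supp f \<times> supp g. f (fst p) * g (snd p) * (if w = fst p @ snd p then 1 else 0))
      = (\<Sum>p\<in>supp f \<times> supp g. if p \<in> SP then h p else 0)"
    unfolding SP_def h_def by (intro sum.cong) auto
  also have "\<dots> = (\<Sum>p\<in>(supp f \<times> supp g) \<inter> SP. h p)"
    using f g by (simp add: sum.inter_restrict)
  also have "\<dots> = (\<Sum>p\<in>SP. h p)"
    using fSP by (intro sum.mono_neutral_left) (auto simp: h_def)
  also have "\<dots> = (\<Sum>k\<in>{0..length w}. h (take k w, drop k w))"
    unfolding SP_def splits_eq
    by (subst sum.reindex) (auto simp: inj_on_def min_def split: if_splits,
        metis length_take min.absorb2)
  also have "\<dots> = falg_mult f g w" unfolding falg_mult_def h_def by simp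
  finally show ?thesis by simp
qed

lemma supp_mult_sub:
  assumes f: "finite (supp f)" and g: "finite (supp g)"
  shows "supp (falg_mult f g) \<subseteq> (\<lambda>p. fst p @ snd p) ` (supp f \<times> supp g)"
proof
  fix w assume "w \<in> supp (falg_mult f g)"
  hence "(\<Sum>p\<in>supp f \<times> supp g. f (fst p) * g (snd p) * (if w = fst p @ snd p then 1 else 0)) \<noteq> 0"
    using mult_formula[OF f g] by simp
  then obtain p where "p \<in> supp f \<times> supp g" "f (fst p) * g (snd p) * (if w = fst p @ snd p then 1 else 0) \<noteq> 0"
    by (meson sum.neutral)
  thus "w \<in> (\<lambda>p. fst p @ snd p) ` (supp f \<times> supp g)" by (auto split: if_splits)
qed

lemma mult_carrier:
  assumes f: "f \<in> falg_carrier M" and g: "g \<in> falg_carrier M"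
  shows "falg_mult f g \<in> falg_carrier M"
proof -
  have ff: "finite (supp f)" and fg: "finite (supp g)" using f g carrierD by auto
  note sub = supp_mult_sub[OF ff fg]
  show ?thesis unfolding falg_carrier_def
  proof (intro CollectI conjI allI impI)
    show "finite (supp (falg_mult f g))" using sub ff fg by (meson finite_SigmaI finite_imageI finite_subset)
    fix w assume "falg_mult f g w \<noteq> 0"
    then obtain u v where uv: "f u \<noteq> 0" "g v \<noteq> 0" "w = u @ v" using sub by auto
    thus "set w \<subseteq> {1..M} \<times> {1..M}" using carrierD(2)[OF f uv(1)] carrierD(2)[OF g uv(2)] by auto
  qed
qed

lemma rho_mult:
  assumes f: "f \<in> falg_carrier M" and g: "g \<in> falg_carrier M"
  shows "rho (falg_mult f g) \<sigma> = rho f \<sigma> * rho g \<sigma>"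
proof -
  have ff: "finite (supp f)" and fg: "finite (supp g)" using f g carrierD by auto
  define T where "T = (\<lambda>p. fst p @ snd p) ` (supp f \<times> supp g)"
  have fT: "finite T" unfolding T_def using ff fg by simp
  have sub: "supp (falg_mult f g) \<subseteq> T" unfolding T_def by (rule supp_mult_sub[OF ff fg])
  have "rho (falg_mult f g) \<sigma> = (\<Sum>w\<in>T. falg_mult f g w * chi_word w \<sigma>)" by (rule rho_sup[OF fT sub])
  also have "\<dots> = (\<Sum>w\<in>T. \<Sum>p\<in>supp f \<times> supp g. f (fst p) * g (snd p) * (if w = fst p @ snd p then 1 else 0) * chi_word w \<sigma>)"
    by (simp add: mult_formula[OF ff fg] sum_distrib_right)
  also have "\<dots> = (\<Sum>p\<in>supp f \<times> supp g. \<Sum>w\<in>T. f (fst p) * g (snd p) * (if w = fst p @ snd p then 1 else 0) * chi_word w \<sigma>)"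
    by (rule sum.swap)
  also have "\<dots> = (\<Sum>p\<in>supp f \<times> supp g. f (fst p) * g (snd p) * chi_word (fst p @ snd p) \<sigma>)"
  proof (rule sum.cong[OF refl])
    fix p assume p: "p \<in> supp f \<times> supp g"
    have pT: "fst p @ snd p \<in> T" unfolding T_def using p by blast
    have "(\<Sum>w\<in>T. f (fst p) * g (snd p) * (if w = fst p @ snd p then 1 else 0) * chi_word w \<sigma>)
        = (\<Sum>w\<in>T. if w = fst p @ snd p then f (fst p) * g (snd p) * chi_word w \<sigma> else 0)"
      by (intro sum.cong) auto
    also have "\<dots> = f (fst p) * g (snd p) * chi_word (fst p @ snd p) \<sigma>"
      using fT pT by (simp add: sum.delta')
    finally show "(\<Sum>w\<in>T. f (fst p) * g (snd p) * (if w = fst p @ snd p then 1 else 0) * chi_word w \<sigma>)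
        = f (fst p) * g (snd p) * chi_word (fst p @ snd p) \<sigma>" .
  qed
  also have "\<dots> = (\<Sum>p\<in>supp f \<times> supp g. (f (fst p) * chi_word (fst p) \<sigma>) * (g (snd p) * chi_word (snd p) \<sigma>))"
    by (simp add: chi_append algebra_simps)
  also have "\<dots> = (\<Sum>u\<in>supp f. \<Sum>v\<in>supp g. (f u * chi_word u \<sigma>) * (g v * chi_word v \<sigma>))"
    by (simp add: sum.cartesian_product split_def)
  also have "\<dots> = rho f \<sigma> * rho g \<sigma>"
    unfolding rho_def by (simp add: sum_product)
  finally show ?thesis .
qed

definition falg_one :: falg where "falg_one = delta []"

lemma falg_gen_delta: "falg_gen i j = delta [(i,j)]" unfolding falg_gen_def delta_def by simp

lemma one_carrier: "falg_one \<in> falg_carrier M" unfolding falg_one_def by (rule delta_carrier) simp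
lemma rho_one: "rho falg_one \<sigma> = 1" unfolding falg_one_def rho_delta by simp
lemma gen_carrier: "i \<in> {1..M} \<Longrightarrow> j \<in> {1..M} \<Longrightarrow> falg_gen i j \<in> falg_carrier M"
  unfolding falg_gen_delta by (rule delta_carrier) simp
lemma rho_gen: "rho (falg_gen i j) \<sigma> = ind \<sigma> (i,j)" unfolding falg_gen_delta rho_delta by simp


context
  fixes M N :: nat and L :: "nat \<Rightarrow> nat \<Rightarrow> nat"
  assumes PL: "pre_latin_square M N L"
begin

lemma sigmaL_some_iff:
  assumes i: "i \<in> {1..M}" and j: "j \<in> {1..M}"
  shows "sigma_L M L x j = Some i \<longleftrightarrow> L i j = x"
proof
  assume L: "L i j = x"
  have uniq: "\<And>k. k \<in> {1..M} \<and> L k j = x \<Longrightarrow> k = i"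
    using PL i j L unfolding pre_latin_square_def by metis
  have "(THE k. k \<in> {1..M} \<and> L k j = x) = i"
    using i L uniq by (intro the_equality) auto
  thus "sigma_L M L x j = Some i" unfolding sigma_L_def using i j L by auto
next
  assume s: "sigma_L M L x j = Some i"
  hence ex: "\<exists>k\<in>{1..M}. L k j = x" and eq: "(THE k. k \<in> {1..M} \<and> L k j = x) = i"
    unfolding sigma_L_def by (auto split: if_splits)
  then obtain k where k: "k \<in> {1..M}" "L k j = x" by auto
  have uniq: "\<And>k'. k' \<in> {1..M} \<and> L k' j = x \<Longrightarrow> k' = k"
    using PL k j unfolding pre_latin_square_def by metis
  have "(THE k. k \<in> {1..M} \<and> L k j = x) = k"
    using k uniq by (intro the_equality) auto
  thus "L i j = x" using eq k by simp
qed

lemma sigmaL_some_D: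
  assumes "sigma_L M L x j = Some i"
  shows "i \<in> {1..M}" "j \<in> {1..M}" "L i j = x"
proof -
  have ex: "\<exists>k\<in>{1..M}. L k j = x" and eq: "(THE k. k \<in> {1..M} \<and> L k j = x) = i"
    and j: "j \<in> {1..M}" using assms unfolding sigma_L_def by (auto split: if_splits)
  then obtain k where k: "k \<in> {1..M}" "L k j = x" by auto
  have uniq: "\<And>k'. k' \<in> {1..M} \<and> L k' j = x \<Longrightarrow> k' = k"
    using PL k j unfolding pre_latin_square_def by metis
  have "(THE k. k \<in> {1..M} \<and> L k j = x) = k"
    using k uniq by (intro the_equality) auto
  thus "i \<in> {1..M}" "j \<in> {1..M}" "L i j = x" using eq k j by auto
qed

lemma sigmaL_pp: "partial_perm M (sigma_L M L x)"
  unfolding partial_perm_def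
proof (intro conjI)
  show "dom (sigma_L M L x) \<subseteq> {1..M}" using sigmaL_some_D by blast
  show "ran (sigma_L M L x) \<subseteq> {1..M}" unfolding ran_def using sigmaL_some_D by blast
  show "inj_on (sigma_L M L x) (dom (sigma_L M L x))"
  proof (rule inj_onI)
    fix j k assume j: "j \<in> dom (sigma_L M L x)" and k: "k \<in> dom (sigma_L M L x)"
      and eq: "sigma_L M L x j = sigma_L M L x k"
    obtain i where i: "sigma_L M L x j = Some i" using j by auto
    hence i2: "sigma_L M L x k = Some i" using eq by simp
    have "L i j = x" "L i k = x" "i \<in> {1..M}" "j \<in> {1..M}" "k \<in> {1..M}"
      using sigmaL_some_D[OF i] sigmaL_some_D[OF i2] by auto
    thus "j = k" using PL unfolding pre_latin_square_def by metis
  qed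
qed

lemma chi_sigmaL:
  assumes "set w \<subseteq> {1..M} \<times> {1..M}"
  shows "chi_word w (sigma_L M L x) = (if \<forall>p\<in>set w. L (fst p) (snd p) = x then 1 else 0)"
  using assms
proof (induction w)
  case Nil then show ?case by simp
next
  case (Cons p w)
  have p: "fst p \<in> {1..M}" "snd p \<in> {1..M}" using Cons(2) by (auto simp: mem_Times_iff)
  have "ind (sigma_L M L x) p = (if L (fst p) (snd p) = x then 1 else 0)"
    unfolding ind_def using sigmaL_some_iff[OF p] by simp
  then show ?case using Cons by auto
qed

end

lemma pp_comp:
  assumes s: "partial_perm M \<sigma>" and t: "partial_perm M \<tau>"
  shows "partial_perm M (\<sigma> \<circ>\<^sub>m \<tau>)"
  unfolding partial_perm_def
proof (intro conjI)
  show "dom (\<sigma> \<circ>\<^sub>m \<tau>) \<subseteq> {1..M}"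
    using t unfolding partial_perm_def map_comp_def by (auto split: option.splits)
  show "ran (\<sigma> \<circ>\<^sub>m \<tau>) \<subseteq> {1..M}"
    using s unfolding partial_perm_def map_comp_def ran_def by (auto split: option.splits)
  show "inj_on (\<sigma> \<circ>\<^sub>m \<tau>) (dom (\<sigma> \<circ>\<^sub>m \<tau>))"
  proof (rule inj_onI)
    fix j k assume j: "j \<in> dom (\<sigma> \<circ>\<^sub>m \<tau>)" and k: "k \<in> dom (\<sigma> \<circ>\<^sub>m \<tau>)"
      and eq: "(\<sigma> \<circ>\<^sub>m \<tau>) j = (\<sigma> \<circ>\<^sub>m \<tau>) k"
    have "(\<sigma> \<circ>\<^sub>m \<tau>) j \<noteq> None" using j by auto
    then obtain l where l: "\<tau> j = Some l" "\<sigma> l \<noteq> None" by (auto simp: map_comp_def split: option.splits)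
    have "(\<sigma> \<circ>\<^sub>m \<tau>) k \<noteq> None" using k by auto
    then obtain l' where l': "\<tau> k = Some l'" "\<sigma> l' \<noteq> None" by (auto simp: map_comp_def split: option.splits)
    have "\<sigma> l = \<sigma> l'" using eq l l' by simp
    hence "l = l'" using s l l' unfolding partial_perm_def inj_on_def by (simp add: domIff)
    hence "\<tau> j = \<tau> k" using l l' by simp
    moreover have "j \<in> dom \<tau>" "k \<in> dom \<tau>" using l l' by auto
    ultimately show "j = k" using t unfolding partial_perm_def inj_on_def by blast
  qed
qed

lemma G_pp:
  assumes PL: "pre_latin_square M N L" and s: "\<sigma> \<in> assoc_semigroup M N L"
  shows "partial_perm M \<sigma>"
  using s
proof (induction rule: assoc_semigroup.induct)
  case (gen x) then show ?case using sigmaL_pp[OF PL] by blast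
next
  case (mult \<sigma> \<tau>) then show ?case using pp_comp by blast
qed

lemma finite_pp: "finite {\<sigma>. partial_perm M \<sigma>}"
proof -
  have "{\<sigma>. partial_perm M \<sigma>} \<subseteq> (\<Union>D\<in>Pow {1..M}. {m. dom m = D \<and> ran m \<subseteq> {1..M}})"
    unfolding partial_perm_def by auto
  moreover have "finite (\<Union>D\<in>Pow {1..M}. {m. dom m = D \<and> ran m \<subseteq> {1..M::nat}})"
    by (intro finite_UN_I) (auto intro: finite_set_of_finite_maps finite_subset)
  ultimately show ?thesis by (rule finite_subset)
qed

lemma finite_G: "pre_latin_square M N L \<Longrightarrow> finite (assoc_semigroup M N L)"
  using finite_pp[of M] G_pp[of M N L] by (metis mem_Collect_eq rev_finite_subset subsetI)

lemma pp_ind_eq: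
  assumes s: "partial_perm M \<sigma>" and t: "partial_perm M \<tau>"
    and eq: "\<forall>i\<in>{1..M}. \<forall>j\<in>{1..M}. (\<sigma> j = Some i) = (\<tau> j = Some i)"
  shows "\<sigma> = \<tau>"
proof
  fix j
  show "\<sigma> j = \<tau> j"
  proof (cases "j \<in> {1..M}")
    case False
    then have "j \<notin> dom \<sigma>" "j \<notin> dom \<tau>" using s t unfolding partial_perm_def by auto
    then show ?thesis by (simp add: domIff)
  next
    case True
    show ?thesis
    proof (cases "\<sigma> j")
      case None
      show ?thesis
      proof (cases "\<tau> j")
        case (Some i)
        then have "i \<in> {1..M}" using t unfolding partial_perm_def ran_def by auto
        then show ?thesis using eq[rule_format, of i j] True None Some by simp
      qed (use None in simp)
    next
      case (Some i)
      then have "i \<in> {1..M}" using s unfolding partial_perm_def ran_def by auto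
      then show ?thesis using eq[rule_format, of i j] True Some by simp
    qed
  qed
qed


definition lenlists :: "nat \<Rightarrow> nat \<Rightarrow> nat list set" where
  "lenlists M n = {xs. set xs \<subseteq> {1..M} \<and> length xs = n}"

definition cA :: "word \<Rightarrow> nat list \<Rightarrow> word" where
  "cA w ls = map2 (\<lambda>p l. (fst p, l)) w ls"
definition cB :: "word \<Rightarrow> nat list \<Rightarrow> word" where
  "cB w ls = map2 (\<lambda>p l. (l, snd p)) w ls"

lemma finite_lenlists: "finite (lenlists M n)"
  unfolding lenlists_def by (rule finite_lists_length_eq) simp

lemma lenlists_0: "lenlists M 0 = {[]}" unfolding lenlists_def by auto

lemma lenlists_Suc: "lenlists M (Suc n) = (\<lambda>(l,ls). l # ls) ` ({1..M} \<times> lenlists M n)"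
  unfolding lenlists_def
  by (auto simp: image_iff length_Suc_conv) 

lemma cA_Cons[simp]: "cA (p # w) (l # ls) = (fst p, l) # cA w ls" unfolding cA_def by simp
lemma cB_Cons[simp]: "cB (p # w) (l # ls) = (l, snd p) # cB w ls" unfolding cB_def by simp
lemma cA_Nil[simp]: "cA [] ls = []" "cA w [] = []" unfolding cA_def by auto
lemma cB_Nil[simp]: "cB [] ls = []" "cB w [] = []" unfolding cB_def by auto

lemma comult_param:
  assumes "falg_comult M f (a,b) \<noteq> 0"
  shows "\<exists>w ls. f w \<noteq> 0 \<and> ls \<in> lenlists M (length w) \<and> a = cA w ls \<and> b = cB w ls"
proof -
  define w where "w = map2 (\<lambda>x y. (fst x, snd y)) a b"
  define ls where "ls = map snd a"
  have c: "length a = length b" "\<forall>t<length a. snd (a ! t) = fst (b ! t) \<and> snd (a ! t) \<in> {1..M}"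
    and fw: "f w \<noteq> 0"
    using assms unfolding falg_comult_def w_def by (auto split: if_splits)
  have lw: "length w = length a" unfolding w_def using c by simp
  have "set ls \<subseteq> {1..M}"
  proof
    fix x assume "x \<in> set ls"
    then obtain t where "t < length a" "x = snd (a!t)" unfolding ls_def by (auto simp: in_set_conv_nth)
    then show "x \<in> {1..M}" using c by auto
  qed
  hence ls: "ls \<in> lenlists M (length w)" unfolding lenlists_def ls_def using c lw by simp
  have "a = cA w ls" unfolding cA_def ls_def w_def
    by (rule nth_equalityI) (use c in \<open>auto simp: prod_eq_iff\<close>)
  moreover have "b = cB w ls" unfolding cB_def ls_def w_def
    by (rule nth_equalityI) (use c in auto)
  ultimately show ?thesis using fw ls by blast
qed

lemma comult_val:
  assumes "ls \<in> lenlists M (length w)"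
  shows "falg_comult M f (cA w ls, cB w ls) = f w"
proof -
  have l: "length ls = length w" "set ls \<subseteq> {1..M}" using assms unfolding lenlists_def by auto
  have m1: "map2 (\<lambda>x y. (fst x, snd y)) (cA w ls) (cB w ls) = w"
    by (rule nth_equalityI) (use l in \<open>auto simp: cA_def cB_def\<close>)
  have m2: "\<forall>t<length (cA w ls). snd (cA w ls ! t) = fst (cB w ls ! t) \<and> snd (cA w ls ! t) \<in> {1..M}"
  proof -
    have lt: "\<And>t. t < length w \<Longrightarrow> ls!t \<in> {1..M}" using l nth_mem by (metis subsetD)
    show ?thesis using l lt by (auto simp: cA_def cB_def)
  qed
  have m3: "length (cA w ls) = length (cB w ls)" by (simp add: cA_def cB_def)
  have cond: "length (cA w ls) = length (cB w ls) \<and> (\<forall>t<length (cA w ls). snd (cA w ls ! t) = fst (cB w ls ! t) \<and> snd (cA w ls ! t) \<in> {1..M})"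
    using m2 m3 by blast
  show ?thesis unfolding falg_comult_def prod.case if_P[OF cond] m1 ..
qed

lemma cAB_inj: "inj_on (\<lambda>(w,ls). (cA w ls, cB w ls)) (Sigma S (\<lambda>w. lenlists M (length w)))"
proof (rule inj_onI, clarify)
  fix w ls w' ls'
  assume l: "ls \<in> lenlists M (length w)" "ls' \<in> lenlists M (length w')"
    and eqA: "cA w ls = cA w' ls'" and eqB: "cB w ls = cB w' ls'"
  have ll: "length ls = length w" "length ls' = length w'" using l unfolding lenlists_def by auto
  have len: "length w = length w'" using arg_cong[OF eqA, of length] ll by (simp add: cA_def)
  have "\<forall>t<length w. fst (w!t) = fst (w'!t) \<and> ls!t = ls'!t"
  proof (intro allI impI)
    fix t assume t: "t < length w"
    have "cA w ls ! t = cA w' ls' ! t" using eqA by simp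
    thus "fst (w!t) = fst (w'!t) \<and> ls!t = ls'!t" using t ll len by (simp add: cA_def)
  qed
  moreover have "\<forall>t<length w. snd (w!t) = snd (w'!t)"
  proof (intro allI impI)
    fix t assume t: "t < length w"
    have "cB w ls ! t = cB w' ls' ! t" using eqB by simp
    thus "snd (w!t) = snd (w'!t)" using t ll len by (simp add: cB_def)
  qed
  ultimately show "w = w' \<and> ls = ls'" using len ll
    by (auto intro!: nth_equalityI simp: prod_eq_iff)
qed

lemma comult_sum:
  assumes f: "finite (supp f)"
  shows "(\<Sum>p\<in>{p. falg_comult M f p \<noteq> 0}. falg_comult M f p * X p)
       = (\<Sum>w\<in>supp f. f w * (\<Sum>ls\<in>lenlists M (length w). X (cA w ls, cB w ls)))"
proof -
  define D where "D = Sigma (supp f) (\<lambda>w. lenlists M (length w))"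
  define \<phi> where "\<phi> = (\<lambda>(w::word, ls::nat list). (cA w ls, cB w ls))"
  have fD: "finite D" unfolding D_def using f finite_lenlists by auto
  have sub: "{p. falg_comult M f p \<noteq> 0} \<subseteq> \<phi> ` D"
  proof
    fix p assume "p \<in> {p. falg_comult M f p \<noteq> 0}"
    then obtain a b where p: "p = (a,b)" "falg_comult M f (a,b) \<noteq> 0" by (cases p) auto
    then obtain w ls where "f w \<noteq> 0" "ls \<in> lenlists M (length w)" "a = cA w ls" "b = cB w ls"
      using comult_param by blast
    thus "p \<in> \<phi> ` D" unfolding D_def \<phi>_def using p by (auto simp: image_iff)
  qed
  have "(\<Sum>p\<in>{p. falg_comult M f p \<noteq> 0}. falg_comult M f p * X p) = (\<Sum>p\<in>\<phi> ` D. falg_comult M f p * X p)"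
    using fD sub by (intro sum.mono_neutral_left) auto
  also have "\<dots> = (\<Sum>q\<in>D. falg_comult M f (\<phi> q) * X (\<phi> q))"
    using cAB_inj[of "supp f" M] unfolding D_def \<phi>_def by (subst sum.reindex) auto
  also have "\<dots> = (\<Sum>q\<in>D. f (fst q) * X (\<phi> q))"
    unfolding D_def \<phi>_def by (intro sum.cong) (auto simp: comult_val)
  also have "\<dots> = (\<Sum>(w,ls)\<in>D. f w * X (cA w ls, cB w ls))"
    unfolding \<phi>_def by (intro sum.cong) auto
  also have "\<dots> = (\<Sum>w\<in>supp f. \<Sum>ls\<in>lenlists M (length w). f w * X (cA w ls, cB w ls))"
    unfolding D_def by (rule sum.Sigma[symmetric]) (use f finite_lenlists in auto)
  also have "\<dots> = (\<Sum>w\<in>supp f. f w * (\<Sum>ls\<in>lenlists M (length w). X (cA w ls, cB w ls)))"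
    by (simp add: sum_distrib_left)
  finally show ?thesis .
qed

lemma ind_comp_sum:
  assumes "ran \<tau> \<subseteq> {1..M}"
  shows "(\<Sum>l\<in>{1..M}. ind \<sigma> (i,l) * ind \<tau> (l,j)) = ind (\<sigma> \<circ>\<^sub>m \<tau>) (i,j)"
proof (cases "\<tau> j")
  case None
  then show ?thesis by (simp add: ind_def map_comp_def)
next
  case (Some l0)
  then have l0: "l0 \<in> {1..M}" using assms unfolding ran_def by auto
  have "(\<Sum>l\<in>{1..M}. ind \<sigma> (i,l) * ind \<tau> (l,j)) = (\<Sum>l\<in>{1..M}. if l = l0 then ind \<sigma> (i,l0) else 0)"
    using Some by (intro sum.cong) (auto simp: ind_def)
  also have "\<dots> = ind \<sigma> (i,l0)" using l0 by simp
  finally show ?thesis using Some by (simp add: ind_def map_comp_def)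
qed

lemma chi_comult_sum:
  assumes "ran \<tau> \<subseteq> {1..M}"
  shows "(\<Sum>ls\<in>lenlists M (length w). chi_word (cA w ls) \<sigma> * chi_word (cB w ls) \<tau>) = chi_word w (\<sigma> \<circ>\<^sub>m \<tau>)"
proof (induction w)
  case Nil
  then show ?case by (simp add: lenlists_0)
next
  case (Cons p w)
  have inj: "inj_on (\<lambda>(l,ls). l # ls) ({1..M} \<times> lenlists M (length w))" by (auto simp: inj_on_def)
  have LS: "lenlists M (length (p # w)) = (\<lambda>(l,ls). l # ls) ` ({1..M} \<times> lenlists M (length w))"
    by (simp add: lenlists_Suc)
  have "(\<Sum>ls\<in>lenlists M (length (p # w)). chi_word (cA (p # w) ls) \<sigma> * chi_word (cB (p # w) ls) \<tau>)
      = (\<Sum>q\<in>{1..M} \<times> lenlists M (length w). chi_word (cA (p # w) ((\<lambda>(l,ls). l # ls) q)) \<sigma> * chi_word (cB (p # w) ((\<lambda>(l,ls). l # ls) q)) \<tau>)"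
    unfolding LS sum.reindex[OF inj] o_def ..
  also have "\<dots> = (\<Sum>q\<in>{1..M} \<times> lenlists M (length w). chi_word (cA (p # w) (fst q # snd q)) \<sigma> * chi_word (cB (p # w) (fst q # snd q)) \<tau>)"
    by (simp add: split_def)
  also have "\<dots> = (\<Sum>q\<in>{1..M} \<times> lenlists M (length w). (ind \<sigma> (fst p, fst q) * ind \<tau> (fst q, snd p)) *
        (chi_word (cA w (snd q)) \<sigma> * chi_word (cB w (snd q)) \<tau>))"
    by (intro sum.cong) (auto simp: algebra_simps)
  also have "\<dots> = (\<Sum>l\<in>{1..M}. ind \<sigma> (fst p, l) * ind \<tau> (l, snd p)) *
        (\<Sum>ls\<in>lenlists M (length w). chi_word (cA w ls) \<sigma> * chi_word (cB w ls) \<tau>)"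
    by (simp add: sum_product sum.cartesian_product split_def)
  also have "\<dots> = ind (\<sigma> \<circ>\<^sub>m \<tau>) p * chi_word w (\<sigma> \<circ>\<^sub>m \<tau>)"
    using ind_comp_sum[OF assms, of \<sigma> "fst p" "snd p"] Cons by simp
  finally show ?case by simp
qed

lemma rho_comp:
  assumes f: "finite (supp f)" and t: "ran \<tau> \<subseteq> {1..M}"
  shows "rho f (\<sigma> \<circ>\<^sub>m \<tau>) = (\<Sum>p\<in>{p. falg_comult M f p \<noteq> 0}.
            falg_comult M f p * chi_word (fst p) \<sigma> * chi_word (snd p) \<tau>)"
proof -
  have "(\<Sum>p\<in>{p. falg_comult M f p \<noteq> 0}. falg_comult M f p * chi_word (fst p) \<sigma> * chi_word (snd p) \<tau>)
      = (\<Sum>p\<in>{p. falg_comult M f p \<noteq> 0}. falg_comult M f p * (chi_word (fst p) \<sigma> * chi_word (snd p) \<tau>))"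
    by (simp add: mult.assoc)
  also have "\<dots> = (\<Sum>w\<in>supp f. f w * (\<Sum>ls\<in>lenlists M (length w). chi_word (cA w ls) \<sigma> * chi_word (cB w ls) \<tau>))"
    using comult_sum[OF f, of M "\<lambda>p. chi_word (fst p) \<sigma> * chi_word (snd p) \<tau>"] by simp
  also have "\<dots> = rho f (\<sigma> \<circ>\<^sub>m \<tau>)" unfolding rho_def using chi_comult_sum[OF t] by simp
  finally show ?thesis by simp
qed


definition fac :: "(nat \<rightharpoonup> nat) \<Rightarrow> nat \<times> nat \<Rightarrow> falg" where
  "fac \<tau> p = (if \<tau> (snd p) = Some (fst p) then falg_gen (fst p) (snd p)
              else falg_add falg_one (falg_smult (-1) (falg_gen (fst p) (snd p))))"

lemma fac_carrier: "p \<in> {1..M} \<times> {1..M} \<Longrightarrow> fac \<tau> p \<in> falg_carrier M"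
  unfolding fac_def
  by (auto intro!: gen_carrier add_carrier one_carrier smult_carrier simp: mem_Times_iff)

lemma rho_fac: "p \<in> {1..M} \<times> {1..M} \<Longrightarrow>
  rho (fac \<tau> p) \<sigma> = (if \<tau> (snd p) = Some (fst p) then ind \<sigma> p else 1 - ind \<sigma> p)"
proof -
  assume p: "p \<in> {1..M} \<times> {1..M}"
  have g: "falg_gen (fst p) (snd p) \<in> falg_carrier M" using p by (auto intro!: gen_carrier simp: mem_Times_iff)
  show ?thesis unfolding fac_def
    using rho_add[OF one_carrier smult_carrier[OF g]] rho_smult[OF g] rho_one rho_gen by simp
qed

lemma foldr_carrier: "(\<forall>g\<in>set gs. g \<in> falg_carrier M) \<Longrightarrow> foldr falg_mult gs falg_one \<in> falg_carrier M"
  by (induction gs) (auto intro: mult_carrier one_carrier)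

lemma rho_foldr: "(\<forall>g\<in>set gs. g \<in> falg_carrier M) \<Longrightarrow>
   rho (foldr falg_mult gs falg_one) \<sigma> = prod_list (map (\<lambda>g. rho g \<sigma>) gs)"
proof (induction gs)
  case Nil then show ?case by (simp add: rho_one)
next
  case (Cons g gs)
  then show ?case using rho_mult[of g M "foldr falg_mult gs falg_one" \<sigma>] foldr_carrier[of gs M] by simp
qed

lemma prod_list_01: "(\<forall>x\<in>set xs. x = 0 \<or> x = (1::complex)) \<Longrightarrow>
   prod_list xs = (if \<forall>x\<in>set xs. x = 1 then 1 else 0)"
  by (induction xs) auto

definition allpairs :: "nat \<Rightarrow> (nat \<times> nat) list" where
  "allpairs M = List.product [1..<M+1] [1..<M+1]"

lemma set_allpairs: "set (allpairs M) = {1..M} \<times> {1..M}"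
  unfolding allpairs_def by auto

definition dlt :: "nat \<Rightarrow> (nat \<rightharpoonup> nat) \<Rightarrow> falg" where
  "dlt M \<tau> = foldr falg_mult (map (fac \<tau>) (allpairs M)) falg_one"

lemma dlt_carrier: "dlt M \<tau> \<in> falg_carrier M"
  unfolding dlt_def by (rule foldr_carrier) (auto simp: set_allpairs intro: fac_carrier)

lemma rho_dlt:
  assumes s: "partial_perm M \<sigma>" and t: "partial_perm M \<tau>"
  shows "rho (dlt M \<tau>) \<sigma> = (if \<sigma> = \<tau> then 1 else 0)"
proof -
  define r where "r p = (if \<tau> (snd p) = Some (fst p) then ind \<sigma> p else 1 - ind \<sigma> p)" for p
  have "rho (dlt M \<tau>) \<sigma> = prod_list (map (\<lambda>g. rho g \<sigma>) (map (fac \<tau>) (allpairs M)))"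
    unfolding dlt_def by (rule rho_foldr) (auto simp: set_allpairs intro: fac_carrier)
  also have "\<dots> = prod_list (map r (allpairs M))"
    unfolding r_def by (intro arg_cong[where f=prod_list]) (auto simp: set_allpairs rho_fac)
  also have "\<dots> = (if \<forall>x\<in>set (map r (allpairs M)). x = 1 then 1 else 0)"
    by (rule prod_list_01) (auto simp: r_def ind_def split: if_splits)
  also have "(\<forall>x\<in>set (map r (allpairs M)). x = 1) \<longleftrightarrow> \<sigma> = \<tau>"
  proof
    assume all: "\<forall>x\<in>set (map r (allpairs M)). x = 1"
    have "\<forall>i\<in>{1..M}. \<forall>j\<in>{1..M}. (\<sigma> j = Some i) = (\<tau> j = Some i)"
    proof (intro ballI)
      fix i j assume "i \<in> {1..M}" "j \<in> {1..M}"
      hence "(i,j) \<in> set (allpairs M)" by (simp add: set_allpairs)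
      hence "r (i,j) = 1" using all by auto
      thus "(\<sigma> j = Some i) = (\<tau> j = Some i)" unfolding r_def ind_def by (auto split: if_splits)
    qed
    thus "\<sigma> = \<tau>" using pp_ind_eq[OF s t] by blast
  next
    assume "\<sigma> = \<tau>"
    thus "\<forall>x\<in>set (map r (allpairs M)). x = 1" by (auto simp: r_def ind_def)
  qed
  finally show ?thesis by simp
qed

lemma surj_rho:
  assumes fG: "finite G" and pp: "\<And>\<sigma>. \<sigma> \<in> G \<Longrightarrow> partial_perm M \<sigma>"
  shows "\<exists>f\<in>falg_carrier M. \<forall>\<sigma>\<in>G. rho f \<sigma> = h \<sigma>"
proof
  define f where "f = (\<lambda>w. \<Sum>\<tau>\<in>G. falg_smult (h \<tau>) (dlt M \<tau>) w)"
  have c: "\<And>\<tau>. \<tau> \<in> G \<Longrightarrow> falg_smult (h \<tau>) (dlt M \<tau>) \<in> falg_carrier M"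
    by (rule smult_carrier[OF dlt_carrier])
  show "f \<in> falg_carrier M" unfolding f_def by (rule carrier_sum[OF fG c])
  show "\<forall>\<sigma>\<in>G. rho f \<sigma> = h \<sigma>"
  proof
    fix \<sigma> assume s: "\<sigma> \<in> G"
    have "rho f \<sigma> = (\<Sum>\<tau>\<in>G. rho (falg_smult (h \<tau>) (dlt M \<tau>)) \<sigma>)"
      unfolding f_def by (rule rho_sum[OF fG]) (use c carrierD in blast)
    also have "\<dots> = (\<Sum>\<tau>\<in>G. if \<tau> = \<sigma> then h \<sigma> else 0)"
      by (intro sum.cong refl) (auto simp: rho_smult[OF dlt_carrier] rho_dlt pp s)
    also have "\<dots> = h \<sigma>" using fG s by simp
    finally show "rho f \<sigma> = h \<sigma>" .
  qed
qed


context
  fixes M N :: nat and L :: "nat \<Rightarrow> nat \<Rightarrow> nat" and \<xi> :: "nat \<Rightarrow> complex vec"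
    and P :: "nat \<Rightarrow> nat \<Rightarrow> complex mat"
  assumes PL: "pre_latin_square M N L" and XI: "orthogonal_basis N \<xi>"
    and PP: "\<forall>i\<in>{1..M}. \<forall>j\<in>{1..M}. P i j = Proj N (\<xi> (L i j))"
begin

lemma xi_carrier: "x \<in> {1..N} \<Longrightarrow> \<xi> x \<in> carrier_vec N"
  using XI unfolding orthogonal_basis_def by auto
lemma xi_nz: "x \<in> {1..N} \<Longrightarrow> \<xi> x \<noteq> 0\<^sub>v N"
  using XI unfolding orthogonal_basis_def by auto
lemma xi_orth: "x \<in> {1..N} \<Longrightarrow> y \<in> {1..N} \<Longrightarrow> x \<noteq> y \<Longrightarrow> \<xi> x \<bullet>c \<xi> y = 0"
  using XI unfolding orthogonal_basis_def by auto
lemma xi_nn: "x \<in> {1..N} \<Longrightarrow> \<xi> x \<bullet>c \<xi> x \<noteq> 0"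
  by (rule cscalar_self_nz[OF xi_carrier xi_nz])

lemma xi_ip: "x \<in> {1..N} \<Longrightarrow> y \<in> {1..N} \<Longrightarrow> \<xi> x \<bullet>c \<xi> y = (if x = y then \<xi> x \<bullet>c \<xi> x else 0)"
  using xi_orth by auto

lemma resolution:
  assumes r: "r < N" and c: "c < N"
  shows "(1\<^sub>m N :: complex mat) $$ (r,c) = (\<Sum>x\<in>{1..N}. Proj N (\<xi> x) $$ (r,c))"
proof -
  define e :: "complex vec" where "e = unit_vec N c"
  have ec: "e \<in> carrier_vec N" unfolding e_def by simp
  obtain cf where cf: "e = vec N (\<lambda>r. \<Sum>x\<in>{1..N}. cf x * (\<xi> x $ r))"
    using XI ec unfolding orthogonal_basis_def by blast
  have cfy: "cf y = cnj (\<xi> y $ c) / (\<xi> y \<bullet>c \<xi> y)" if y: "y \<in> {1..N}" for y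
  proof -
    have "cnj (\<xi> y $ c) = (\<Sum>k<N. e $ k * cnj (\<xi> y $ k))"
    proof -
      have "(\<Sum>k<N. e $ k * cnj (\<xi> y $ k)) = (\<Sum>k<N. if k = c then cnj (\<xi> y $ c) else 0)"
        unfolding e_def by (intro sum.cong) (auto simp: unit_vec_def)
      thus ?thesis using c by simp
    qed
    also have "\<dots> = (\<Sum>k<N. (\<Sum>x\<in>{1..N}. cf x * (\<xi> x $ k)) * cnj (\<xi> y $ k))"
      by (intro sum.cong refl) (subst cf, simp)
    also have "\<dots> = (\<Sum>k<N. \<Sum>x\<in>{1..N}. cf x * ((\<xi> x $ k) * cnj (\<xi> y $ k)))"
      by (simp add: sum_distrib_right mult.assoc)
    also have "\<dots> = (\<Sum>x\<in>{1..N}. \<Sum>k<N. cf x * ((\<xi> x $ k) * cnj (\<xi> y $ k)))"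
      by (rule sum.swap)
    also have "\<dots> = (\<Sum>x\<in>{1..N}. cf x * (\<xi> x \<bullet>c \<xi> y))"
      by (intro sum.cong refl) (simp add: sum_distrib_left cscalar_eq[OF xi_carrier xi_carrier[OF y]])
    also have "\<dots> = (\<Sum>x\<in>{1..N}. if x = y then cf y * (\<xi> y \<bullet>c \<xi> y) else 0)"
    proof (intro sum.cong refl)
      fix x assume x: "x \<in> {1..N}"
      show "cf x * (\<xi> x \<bullet>c \<xi> y) = (if x = y then cf y * (\<xi> y \<bullet>c \<xi> y) else 0)"
        using xi_orth[OF x y] by (cases "x = y") simp_all
    qed
    also have "\<dots> = cf y * (\<xi> y \<bullet>c \<xi> y)" using y by simp
    finally have "cnj (\<xi> y $ c) = cf y * (\<xi> y \<bullet>c \<xi> y)" .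
    thus ?thesis using xi_nn[OF y] by (simp add: eq_divide_eq)
  qed
  have "(1\<^sub>m N :: complex mat) $$ (r,c) = e $ r" unfolding e_def using r c by simp
  also have "\<dots> = (\<Sum>x\<in>{1..N}. cf x * (\<xi> x $ r))" using cf r by simp
  also have "\<dots> = (\<Sum>x\<in>{1..N}. Proj N (\<xi> x) $$ (r,c))"
    by (intro sum.cong refl) (simp add: cfy Proj_index r c)
  finally show ?thesis .
qed

lemma Proj_prod_xi:
  assumes x: "x \<in> {1..N}" and y: "y \<in> {1..N}" and r: "r < N" and c: "c < N"
  shows "(Proj N (\<xi> y) * Proj N (\<xi> x)) $$ (r,c) = (if x = y then Proj N (\<xi> y) $$ (r,c) else 0)"
proof (cases "x = y")
  case True
  then show ?thesis using Proj_idem[OF xi_carrier[OF y] xi_nz[OF y]] by simp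
next
  case False
  have "Proj N (\<xi> y) * Proj N (\<xi> x) = 0\<^sub>m N N"
    using Proj_orth[OF xi_carrier[OF y] xi_carrier[OF x] xi_orth[OF y x]] False by simp
  then show ?thesis using False r c by simp
qed

lemma word_mat_formula:
  assumes "set w \<subseteq> {1..M} \<times> {1..M}"
  shows "word_mat N P w \<in> carrier_mat N N \<and>
    (\<forall>r<N. \<forall>c<N. word_mat N P w $$ (r,c) = (\<Sum>x\<in>{1..N}. chi_word w (sigma_L M L x) * Proj N (\<xi> x) $$ (r,c)))"
  using assms
proof (induction w)
  case Nil
  then show ?case using resolution by (simp add: word_mat_def)
next
  case (Cons p w)
  obtain i j where p: "p = (i,j)" by (cases p)
  have ij: "i \<in> {1..M}" "j \<in> {1..M}" using Cons(2) p by auto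
  have IH: "word_mat N P w \<in> carrier_mat N N"
    "\<And>r c. r < N \<Longrightarrow> c < N \<Longrightarrow> word_mat N P w $$ (r,c) = (\<Sum>x\<in>{1..N}. chi_word w (sigma_L M L x) * Proj N (\<xi> x) $$ (r,c))"
    using Cons by auto
  define y where "y = L i j"
  have y: "y \<in> {1..N}" using PL ij unfolding y_def pre_latin_square_def by auto
  have Pij: "P i j = Proj N (\<xi> y)" using PP ij unfolding y_def by simp
  have wm: "word_mat N P (p # w) = P i j * word_mat N P w" unfolding word_mat_def p by simp
  have car: "word_mat N P (p # w) \<in> carrier_mat N N" unfolding wm Pij
    by (rule mult_carrier_mat[OF Proj_carrier IH(1)])
  have "word_mat N P (p # w) $$ (r,c) = (\<Sum>x\<in>{1..N}. chi_word (p # w) (sigma_L M L x) * Proj N (\<xi> x) $$ (r,c))"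
    if r: "r < N" and c: "c < N" for r c
  proof -
    have "word_mat N P (p # w) $$ (r,c) = (\<Sum>k<N. Proj N (\<xi> y) $$ (r,k) * word_mat N P w $$ (k,c))"
      unfolding wm Pij using IH(1) r c by (simp add: scalar_prod_def lessThan_atLeast0 index_mult_mat)
    also have "\<dots> = (\<Sum>k<N. \<Sum>x\<in>{1..N}. chi_word w (sigma_L M L x) * (Proj N (\<xi> y) $$ (r,k) * Proj N (\<xi> x) $$ (k,c)))"
      by (intro sum.cong refl) (simp add: IH(2) c sum_distrib_left algebra_simps)
    also have "\<dots> = (\<Sum>x\<in>{1..N}. \<Sum>k<N. chi_word w (sigma_L M L x) * (Proj N (\<xi> y) $$ (r,k) * Proj N (\<xi> x) $$ (k,c)))"
      by (rule sum.swap)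
    also have "\<dots> = (\<Sum>x\<in>{1..N}. chi_word w (sigma_L M L x) * (Proj N (\<xi> y) * Proj N (\<xi> x)) $$ (r,c))"
      using r c by (intro sum.cong refl) (simp add: sum_distrib_left scalar_prod_def lessThan_atLeast0 index_mult_mat)
    also have "\<dots> = (\<Sum>x\<in>{1..N}. if x = y then chi_word w (sigma_L M L y) * Proj N (\<xi> y) $$ (r,c) else 0)"
    proof (intro sum.cong refl)
      fix x assume x: "x \<in> {1..N}"
      show "chi_word w (sigma_L M L x) * (Proj N (\<xi> y) * Proj N (\<xi> x)) $$ (r,c)
          = (if x = y then chi_word w (sigma_L M L y) * Proj N (\<xi> y) $$ (r,c) else 0)"
        unfolding Proj_prod_xi[OF x y r c] by simp
    qed
    also have "\<dots> = chi_word w (sigma_L M L y) * Proj N (\<xi> y) $$ (r,c)" using y by simp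
    also have "\<dots> = (\<Sum>x\<in>{1..N}. chi_word (p # w) (sigma_L M L x) * Proj N (\<xi> x) $$ (r,c))"
    proof -
      have "ind (sigma_L M L x) p = (if L i j = x then 1 else 0)" for x
        unfolding ind_def p using sigmaL_some_iff[OF PL ij] by simp
      hence "(\<Sum>x\<in>{1..N}. chi_word (p # w) (sigma_L M L x) * Proj N (\<xi> x) $$ (r,c))
          = (\<Sum>x\<in>{1..N}. if x = y then chi_word w (sigma_L M L y) * Proj N (\<xi> y) $$ (r,c) else 0)"
        unfolding y_def by (intro sum.cong refl) auto
      thus ?thesis using y by simp
    qed
    finally show ?thesis .
  qed
  then show ?case using car by blast
qed

lemma piP_formula:
  assumes f: "f \<in> falg_carrier M" and r: "r < N" and c: "c < N"
  shows "pi_P N P f $$ (r,c) = (\<Sum>x\<in>{1..N}. rho f (sigma_L M L x) * Proj N (\<xi> x) $$ (r,c))"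
proof -
  have "pi_P N P f $$ (r,c) = (\<Sum>w\<in>supp f. f w * word_mat N P w $$ (r,c))"
    unfolding pi_P_def using r c by simp
  also have "\<dots> = (\<Sum>w\<in>supp f. \<Sum>x\<in>{1..N}. f w * chi_word w (sigma_L M L x) * Proj N (\<xi> x) $$ (r,c))"
  proof (intro sum.cong refl)
    fix w assume "w \<in> supp f"
    hence "set w \<subseteq> {1..M} \<times> {1..M}" using f carrierD(2) by blast
    thus "f w * word_mat N P w $$ (r,c) = (\<Sum>x\<in>{1..N}. f w * chi_word w (sigma_L M L x) * Proj N (\<xi> x) $$ (r,c))"
      using word_mat_formula r c by (simp add: sum_distrib_left mult.assoc)
  qed
  also have "\<dots> = (\<Sum>x\<in>{1..N}. \<Sum>w\<in>supp f. f w * chi_word w (sigma_L M L x) * Proj N (\<xi> x) $$ (r,c))"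
    by (rule sum.swap)
  also have "\<dots> = (\<Sum>x\<in>{1..N}. rho f (sigma_L M L x) * Proj N (\<xi> x) $$ (r,c))"
    unfolding rho_def by (simp add: sum_distrib_right)
  finally show ?thesis .
qed

lemma coeff_extract:
  assumes h: "\<forall>r<N. \<forall>c<N. (\<Sum>x\<in>{1..N}. h x * Proj N (\<xi> x) $$ (r,c)) = 0"
    and y: "y \<in> {1..N}"
  shows "h y = 0"
proof -
  have yc: "\<xi> y \<in> carrier_vec N" using xi_carrier[OF y] .
  obtain r where r: "r < N" "\<xi> y $ r \<noteq> 0"
    using xi_nz[OF y] yc by (metis carrier_vecD eq_vecI index_zero_vec(1) index_zero_vec(2))
  have "0 = (\<Sum>c<N. (\<Sum>x\<in>{1..N}. h x * Proj N (\<xi> x) $$ (r,c)) * \<xi> y $ c)"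
    using h r by simp
  also have "\<dots> = (\<Sum>c<N. \<Sum>x\<in>{1..N}. (h x * Proj N (\<xi> x) $$ (r,c)) * \<xi> y $ c)"
    by (simp add: sum_distrib_right)
  also have "\<dots> = (\<Sum>c<N. \<Sum>x\<in>{1..N}. (h x * \<xi> x $ r / (\<xi> x \<bullet>c \<xi> x)) * (\<xi> y $ c * cnj (\<xi> x $ c)))"
  proof (intro sum.cong refl)
    fix c x assume "c \<in> {..<N}"
    hence "c < N" by simp
    thus "(h x * Proj N (\<xi> x) $$ (r,c)) * \<xi> y $ c = (h x * \<xi> x $ r / (\<xi> x \<bullet>c \<xi> x)) * (\<xi> y $ c * cnj (\<xi> x $ c))"
      using r by (simp add: Proj_index)
  qed
  also have "\<dots> = (\<Sum>x\<in>{1..N}. \<Sum>c<N. (h x * \<xi> x $ r / (\<xi> x \<bullet>c \<xi> x)) * (\<xi> y $ c * cnj (\<xi> x $ c)))"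
    by (rule sum.swap)
  also have "\<dots> = (\<Sum>x\<in>{1..N}. (h x * \<xi> x $ r / (\<xi> x \<bullet>c \<xi> x)) * (\<xi> y \<bullet>c \<xi> x))"
    by (intro sum.cong refl) (simp add: sum_distrib_left cscalar_eq[OF yc xi_carrier])
  also have "\<dots> = (\<Sum>x\<in>{1..N}. if x = y then h y * \<xi> y $ r else 0)"
  proof (intro sum.cong refl)
    fix x assume x: "x \<in> {1..N}"
    show "(h x * \<xi> x $ r / (\<xi> x \<bullet>c \<xi> x)) * (\<xi> y \<bullet>c \<xi> x) = (if x = y then h y * \<xi> y $ r else 0)"
    proof (cases "x = y")
      case True thus ?thesis using xi_nn[OF y] by simp
    next
      case False thus ?thesis using xi_orth[OF y x] by simp
    qed
  qed
  also have "\<dots> = h y * \<xi> y $ r" using y by simp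
  finally show ?thesis using r by simp
qed

end


lemma tens_supp_sum:
  assumes g: "finite (supp g)" and h: "finite (supp h)"
  shows "(\<Sum>p\<in>supp g \<times> supp h. g (fst p) * h (snd p) * chi_word (fst p) \<sigma> * chi_word (snd p) \<tau>)
       = rho g \<sigma> * rho h \<tau>"
proof -
  have "(\<Sum>p\<in>supp g \<times> supp h. g (fst p) * h (snd p) * chi_word (fst p) \<sigma> * chi_word (snd p) \<tau>)
      = (\<Sum>p\<in>supp g \<times> supp h. (g (fst p) * chi_word (fst p) \<sigma>) * (h (snd p) * chi_word (snd p) \<tau>))"
    by (simp add: algebra_simps)
  also have "\<dots> = (\<Sum>u\<in>supp g. \<Sum>v\<in>supp h. (g u * chi_word u \<sigma>) * (h v * chi_word v \<tau>))"
    by (simp add: sum.cartesian_product split_def)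
  also have "\<dots> = rho g \<sigma> * rho h \<tau>" unfolding rho_def by (simp add: sum_product)
  finally show ?thesis .
qed

lemma finite_comult_supp:
  assumes f: "finite (supp f)"
  shows "finite {p. falg_comult M f p \<noteq> 0}"
proof -
  define D where "D = Sigma (supp f) (\<lambda>w. lenlists M (length w))"
  have fD: "finite D" unfolding D_def using f finite_lenlists by auto
  have "{p. falg_comult M f p \<noteq> 0} \<subseteq> (\<lambda>(w,ls). (cA w ls, cB w ls)) ` D"
  proof
    fix p assume "p \<in> {p. falg_comult M f p \<noteq> 0}"
    then obtain a b where p: "p = (a,b)" "falg_comult M f (a,b) \<noteq> 0" by (cases p) auto
    then obtain w ls where "f w \<noteq> 0" "ls \<in> lenlists M (length w)" "a = cA w ls" "b = cB w ls"
      using comult_param by blast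
    thus "p \<in> (\<lambda>(w,ls). (cA w ls, cB w ls)) ` D" unfolding D_def using p by (auto simp: image_iff)
  qed
  thus ?thesis using fD by (meson finite_imageI finite_subset)
qed

lemma comult_supp_letters:
  assumes f: "f \<in> falg_carrier M" and p: "falg_comult M f p \<noteq> 0"
  shows "set (fst p) \<subseteq> {1..M} \<times> {1..M}" "set (snd p) \<subseteq> {1..M} \<times> {1..M}"
proof -
  obtain a b where ab: "p = (a,b)" by (cases p)
  then obtain w ls where w: "f w \<noteq> 0" "ls \<in> lenlists M (length w)" "a = cA w ls" "b = cB w ls"
    using comult_param p by blast
  have wl: "set w \<subseteq> {1..M} \<times> {1..M}" using carrierD(2)[OF f w(1)] .
  have ls: "set ls \<subseteq> {1..M}" "length ls = length w" using w(2) unfolding lenlists_def by auto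
  have "set (cA w ls) \<subseteq> {1..M} \<times> {1..M}"
  proof
    fix q assume "q \<in> set (cA w ls)"
    then obtain t where t: "t < length w" "q = (fst (w!t), ls!t)" using ls unfolding cA_def by (auto simp: in_set_conv_nth)
    have "w!t \<in> {1..M} \<times> {1..M}" using t wl nth_mem by blast
    moreover have "ls!t \<in> {1..M}" using t ls nth_mem by (metis subsetD)
    ultimately show "q \<in> {1..M} \<times> {1..M}" using t by (auto simp: mem_Times_iff)
  qed
  moreover have "set (cB w ls) \<subseteq> {1..M} \<times> {1..M}"
  proof
    fix q assume "q \<in> set (cB w ls)"
    then obtain t where t: "t < length w" "q = (ls!t, snd (w!t))" using ls unfolding cB_def by (auto simp: in_set_conv_nth)
    have "w!t \<in> {1..M} \<times> {1..M}" using t wl nth_mem by blast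
    moreover have "ls!t \<in> {1..M}" using t ls nth_mem by (metis subsetD)
    ultimately show "q \<in> {1..M} \<times> {1..M}" using t by (auto simp: mem_Times_iff)
  qed
  ultimately show "set (fst p) \<subseteq> {1..M} \<times> {1..M}" "set (snd p) \<subseteq> {1..M} \<times> {1..M}" using ab w by auto
qed


lemma coideal_targetE:
  assumes "t \<in> coideal_target M I"
  obtains n :: nat and x y where "\<forall>k<n. x k \<in> falg_carrier M \<and> y k \<in> falg_carrier M \<and> (x k \<in> I \<or> y k \<in> I)"
    "t = (\<lambda>p. \<Sum>k<n. tens (x k) (y k) p)"
  using assms unfolding coideal_target_def by blast

lemma coideal_targetI:
  fixes n :: nat
  assumes "\<forall>k<n. x k \<in> falg_carrier M \<and> y k \<in> falg_carrier M \<and> (x k \<in> I \<or> y k \<in> I)"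
    "t = (\<lambda>p. \<Sum>k<n. tens (x k) (y k) p)"
  shows "t \<in> coideal_target M I"
  using assms unfolding coideal_target_def by blast

context
  fixes M N :: nat and L :: "nat \<Rightarrow> nat \<Rightarrow> nat" and \<xi> :: "nat \<Rightarrow> complex vec"
    and P :: "nat \<Rightarrow> nat \<Rightarrow> complex mat"
  assumes PL: "pre_latin_square M N L" and XI: "orthogonal_basis N \<xi>"
    and PP: "\<forall>i\<in>{1..M}. \<forall>j\<in>{1..M}. P i j = Proj N (\<xi> (L i j))"
begin

abbreviation "G \<equiv> assoc_semigroup M N L"

lemma G_ran: "\<sigma> \<in> G \<Longrightarrow> ran \<sigma> \<subseteq> {1..M}"
  using G_pp[OF PL] unfolding partial_perm_def by blast

lemma clause2:
  assumes f: "f \<in> falg_carrier M" and s: "\<sigma> \<in> G" and t: "\<tau> \<in> G"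
  shows "rho f (\<sigma> \<circ>\<^sub>m \<tau>) = (\<Sum>p\<in>{p. falg_comult M f p \<noteq> 0}.
            falg_comult M f p * chi_word (fst p) \<sigma> * chi_word (snd p) \<tau>)"
  using rho_comp[OF carrierD(1)[OF f] G_ran[OF t]] .

lemma piP_zero_iff:
  assumes f: "f \<in> falg_carrier M"
  shows "pi_P N P f = 0\<^sub>m N N \<longleftrightarrow> (\<forall>x\<in>{1..N}. rho f (sigma_L M L x) = 0)"
proof
  assume z: "pi_P N P f = 0\<^sub>m N N"
  have "\<forall>r<N. \<forall>c<N. (\<Sum>x\<in>{1..N}. rho f (sigma_L M L x) * Proj N (\<xi> x) $$ (r,c)) = 0"
  proof (intro allI impI)
    fix r c assume r: "r < N" and c: "c < N"
    have "pi_P N P f $$ (r,c) = 0" using z r c by simp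
    thus "(\<Sum>x\<in>{1..N}. rho f (sigma_L M L x) * Proj N (\<xi> x) $$ (r,c)) = 0"
      using piP_formula[OF PL XI PP f r c] by simp
  qed
  hence h: "\<forall>r<N. \<forall>c<N. (\<Sum>x\<in>{1..N}. (\<lambda>x. rho f (sigma_L M L x)) x * Proj N (\<xi> x) $$ (r,c)) = 0" by simp
  show "\<forall>x\<in>{1..N}. rho f (sigma_L M L x) = 0"
  proof
    fix x assume x: "x \<in> {1..N}"
    show "rho f (sigma_L M L x) = 0" using coeff_extract[OF PL XI PP h x] by simp
  qed
next
  assume h: "\<forall>x\<in>{1..N}. rho f (sigma_L M L x) = 0"
  show "pi_P N P f = 0\<^sub>m N N"
  proof (rule eq_matI)
    fix r c assume "r < dim_row (0\<^sub>m N N :: complex mat)" "c < dim_col (0\<^sub>m N N :: complex mat)"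
    hence r: "r < N" and c: "c < N" by auto
    show "pi_P N P f $$ (r,c) = 0\<^sub>m N N $$ (r,c)"
      using piP_formula[OF PL XI PP f r c] h r c by simp
  qed (simp_all add: pi_P_def)
qed

lemma clause4:
  assumes I: "admissible_ideal M N P I"
  shows "I \<subseteq> {f\<in>falg_carrier M. \<forall>\<sigma>\<in>G. rho f \<sigma> = 0}"
proof -
  note Iu = I[unfolded admissible_ideal_def]
  have Ic: "I \<subseteq> falg_carrier M" using Iu by (rule conjunct1)
  have Ipi: "\<forall>f\<in>I. pi_P N P f = 0\<^sub>m N N"
    using Iu[THEN conjunct2, THEN conjunct2, THEN conjunct2, THEN conjunct2, THEN conjunct2,
        THEN conjunct2, THEN conjunct2, THEN conjunct2, THEN conjunct2, THEN conjunct2] .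
  have Ico: "\<forall>f\<in>I. falg_comult M f \<in> coideal_target M I"
    using Iu[THEN conjunct2, THEN conjunct2, THEN conjunct2, THEN conjunct2, THEN conjunct2,
        THEN conjunct2, THEN conjunct2, THEN conjunct2, THEN conjunct2, THEN conjunct1] .
  have main: "\<forall>f\<in>I. rho f \<sigma> = 0" if s: "\<sigma> \<in> G" for \<sigma>
    using s
  proof (induction rule: assoc_semigroup.induct)
    case (gen x)
    show ?case
    proof
      fix f assume f: "f \<in> I"
      have "f \<in> falg_carrier M" using f Ic by blast
      hence "pi_P N P f = 0\<^sub>m N N \<longleftrightarrow> (\<forall>x\<in>{1..N}. rho f (sigma_L M L x) = 0)" by (rule piP_zero_iff)
      moreover have "pi_P N P f = 0\<^sub>m N N" using Ipi f by blast
      ultimately show "rho f (sigma_L M L x) = 0" using gen by blast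
    qed
  next
    case (mult \<sigma> \<tau>)
    show ?case
    proof
      fix f assume fI: "f \<in> I"
      have f: "f \<in> falg_carrier M" using fI Ic by blast
      have "falg_comult M f \<in> coideal_target M I" using Ico fI by blast
      then obtain n :: nat and x y where xy: "\<forall>k<n. x k \<in> falg_carrier M \<and> y k \<in> falg_carrier M \<and> (x k \<in> I \<or> y k \<in> I)"
        and cf: "falg_comult M f = (\<lambda>p. \<Sum>k<n. tens (x k) (y k) p)"
        by (rule coideal_targetE)
      define T where "T = {p. falg_comult M f p \<noteq> 0}"
      define U where "U = T \<union> (\<Union>k<n. supp (x k) \<times> supp (y k))"
      have fT: "finite T" unfolding T_def by (rule finite_comult_supp[OF carrierD(1)[OF f]])
      have fxy: "finite (supp (x k))" "finite (supp (y k))" if "k < n" for k using xy that carrierD by blast+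
      have fU: "finite U" unfolding U_def using fT fxy by auto
      define X where "X p = chi_word (fst p) \<sigma> * chi_word (snd p) \<tau>" for p
      have "rho f (\<sigma> \<circ>\<^sub>m \<tau>) = (\<Sum>p\<in>T. falg_comult M f p * X p)"
        unfolding T_def X_def using clause2[OF f mult(1) mult(2)] by (simp add: mult.assoc)
      also have "\<dots> = (\<Sum>p\<in>U. falg_comult M f p * X p)"
        using fU by (intro sum.mono_neutral_left) (auto simp: U_def T_def)
      also have "\<dots> = (\<Sum>p\<in>U. \<Sum>k<n. x k (fst p) * y k (snd p) * X p)"
        unfolding cf tens_def by (simp add: split_def sum_distrib_right)
      also have "\<dots> = (\<Sum>k<n. \<Sum>p\<in>U. x k (fst p) * y k (snd p) * X p)"
        by (rule sum.swap)
      also have "\<dots> = (\<Sum>k<n. rho (x k) \<sigma> * rho (y k) \<tau>)"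
      proof (intro sum.cong refl)
        fix k assume k: "k \<in> {..<n}"
        have sub: "supp (x k) \<times> supp (y k) \<subseteq> U" unfolding U_def using k by blast
        have "(\<Sum>p\<in>U. x k (fst p) * y k (snd p) * X p) = (\<Sum>p\<in>supp (x k) \<times> supp (y k). x k (fst p) * y k (snd p) * X p)"
          using fU sub by (intro sum.mono_neutral_right) auto
        also have "\<dots> = rho (x k) \<sigma> * rho (y k) \<tau>"
          unfolding X_def using tens_supp_sum[OF fxy] k by (simp add: mult.assoc)
        finally show "(\<Sum>p\<in>U. x k (fst p) * y k (snd p) * X p) = rho (x k) \<sigma> * rho (y k) \<tau>" .
      qed
      also have "\<dots> = 0"
      proof (rule sum.neutral, rule ballI)
        fix k assume "k \<in> {..<n}"
        hence "x k \<in> I \<or> y k \<in> I" using xy by auto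
        thus "rho (x k) \<sigma> * rho (y k) \<tau> = 0" using mult(3) mult(4) by auto
      qed
      finally show "rho f (\<sigma> \<circ>\<^sub>m \<tau>) = 0" .
    qed
  qed
  show ?thesis using main Ic by blast
qed

end


lemma sum_double_split:
  fixes g :: "nat \<Rightarrow> 'a::comm_monoid_add"
  shows "(\<Sum>k<m+m. g k) = (\<Sum>k<m. g k) + (\<Sum>k<m. g (k + m))"
proof -
  have e: "{..<m+m} = {..<m} \<union> {m..<m+m}" by auto
  have "(\<Sum>k<m+m. g k) = (\<Sum>k\<in>{..<m} \<union> {m..<m+m}. g k)" unfolding e ..
  also have "\<dots> = (\<Sum>k<m. g k) + (\<Sum>k\<in>{m..<m+m}. g k)"
    by (rule sum.union_disjoint) auto
  also have "(\<Sum>k\<in>{m..<m+m}. g k) = (\<Sum>k\<in>{0..<m}. g (k + m))"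
    using sum.shift_bounds_nat_ivl[of g 0 m m] by simp
  finally show ?thesis by (simp add: lessThan_atLeast0)
qed

lemma sum_list_idx:
  assumes "distinct ts"
  shows "(\<Sum>k<length ts. F (ts ! k)) = (\<Sum>p\<in>set ts. F p)"
proof -
  have inj: "inj_on (\<lambda>k. ts ! k) {..<length ts}" using assms by (auto simp: inj_on_def nth_eq_iff_index_eq)
  have im: "(\<lambda>k. ts ! k) ` {..<length ts} = set ts" by (auto simp: in_set_conv_nth image_iff)
  show ?thesis using sum.reindex[OF inj, of F] im by simp
qed

context
  fixes M N :: nat and L :: "nat \<Rightarrow> nat \<Rightarrow> nat" and \<xi> :: "nat \<Rightarrow> complex vec"
    and P :: "nat \<Rightarrow> nat \<Rightarrow> complex mat"
  assumes PL: "pre_latin_square M N L" and XI: "orthogonal_basis N \<xi>"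
    and PP: "\<forall>i\<in>{1..M}. \<forall>j\<in>{1..M}. P i j = Proj N (\<xi> (L i j))"
begin

abbreviation "GG \<equiv> assoc_semigroup M N L"
abbreviation "KK \<equiv> {f\<in>falg_carrier M. \<forall>\<sigma>\<in>GG. rho f \<sigma> = 0}"

lemma Gpp: "\<sigma> \<in> GG \<Longrightarrow> partial_perm M \<sigma>" by (rule G_pp[OF PL])
lemma finG: "finite GG" by (rule finite_G[OF PL])

definition proj :: "falg \<Rightarrow> falg" where
  "proj a = (\<lambda>w. \<Sum>\<tau>\<in>GG. falg_smult (rho a \<tau>) (dlt M \<tau>) w)"

lemma proj_carrier: "proj a \<in> falg_carrier M"
  unfolding proj_def by (rule carrier_sum[OF finG smult_carrier[OF dlt_carrier]])

lemma rho_proj: assumes s: "\<sigma> \<in> GG" shows "rho (proj a) \<sigma> = rho a \<sigma>"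
proof -
  have "rho (proj a) \<sigma> = (\<Sum>\<tau>\<in>GG. rho (falg_smult (rho a \<tau>) (dlt M \<tau>)) \<sigma>)"
    unfolding proj_def
    by (rule rho_sum[OF finG]) (rule carrierD(1)[OF smult_carrier[OF dlt_carrier]])
  also have "\<dots> = (\<Sum>\<tau>\<in>GG. if \<tau> = \<sigma> then rho a \<sigma> else 0)"
  proof (intro sum.cong refl)
    fix \<tau> assume t: "\<tau> \<in> GG"
    show "rho (falg_smult (rho a \<tau>) (dlt M \<tau>)) \<sigma> = (if \<tau> = \<sigma> then rho a \<sigma> else 0)"
      unfolding rho_smult[OF dlt_carrier] rho_dlt[OF Gpp[OF s] Gpp[OF t]] by auto
  qed
  also have "\<dots> = rho a \<sigma>" using finG s by simp
  finally show ?thesis .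
qed

lemma proj_val: "proj a w = (\<Sum>\<tau>\<in>GG. rho a \<tau> * dlt M \<tau> w)"
  unfolding proj_def falg_smult_def by simp

lemma compl_K:
  assumes "set a \<subseteq> {1..M} \<times> {1..M}"
  shows "falg_smult c (falg_add (delta a) (falg_smult (-1) (proj (delta a)))) \<in> KK"
proof -
  have d: "delta a \<in> falg_carrier M" using delta_carrier[OF assms] .
  have c1: "falg_add (delta a) (falg_smult (-1) (proj (delta a))) \<in> falg_carrier M"
    by (rule add_carrier[OF d smult_carrier[OF proj_carrier]])
  have "rho (falg_smult c (falg_add (delta a) (falg_smult (-1) (proj (delta a))))) \<sigma> = 0" if s: "\<sigma> \<in> GG" for \<sigma>
    unfolding rho_smult[OF c1] rho_add[OF d smult_carrier[OF proj_carrier]] rho_smult[OF proj_carrier]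
      rho_proj[OF s] by simp
  thus ?thesis using smult_carrier[OF c1] by blast
qed

lemma coideal:
  assumes fK: "f \<in> KK"
  shows "falg_comult M f \<in> coideal_target M KK"
proof -
  have f: "f \<in> falg_carrier M" using fK by blast
  define T where "T = {p. falg_comult M f p \<noteq> 0}"
  have fT: "finite T" unfolding T_def by (rule finite_comult_supp[OF carrierD(1)[OF f]])
  have let1: "set (fst p) \<subseteq> {1..M} \<times> {1..M}" and let2: "set (snd p) \<subseteq> {1..M} \<times> {1..M}" if "p \<in> T" for p :: "word \<times> word"
    using comult_supp_letters[OF f] that unfolding T_def by auto
  define c where "c p = falg_comult M f p" for p :: "word \<times> word"
  define X1 where "X1 p = falg_smult (c p) (falg_add (delta (fst p)) (falg_smult (-1) (proj (delta (fst p)))))" for p :: "word \<times> word"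
  define Y1 where "Y1 p = delta (snd p)" for p :: "word \<times> word"
  define X2 where "X2 p = falg_smult (c p) (proj (delta (fst p)))" for p :: "word \<times> word"
  define Y2 where "Y2 p = falg_smult 1 (falg_add (delta (snd p)) (falg_smult (-1) (proj (delta (snd p)))))" for p :: "word \<times> word"
  have X1K: "X1 p \<in> KK" if "p \<in> T" for p unfolding X1_def by (rule compl_K[OF let1[OF that]])
  have Y2K: "Y2 p \<in> KK" if "p \<in> T" for p unfolding Y2_def by (rule compl_K[OF let2[OF that]])
  have Y1C: "Y1 p \<in> falg_carrier M" if "p \<in> T" for p unfolding Y1_def by (rule delta_carrier[OF let2[OF that]])
  have X2C: "X2 p \<in> falg_carrier M" for p unfolding X2_def by (rule smult_carrier[OF proj_carrier])
  have ident: "falg_comult M f q = (\<Sum>p\<in>T. tens (X1 p) (Y1 p) q + tens (X2 p) (Y2 p) q)" for q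
  proof -
    define D where "D \<tau> = dlt M \<tau> (fst q)" for \<tau>
    define D' where "D' \<tau> = dlt M \<tau> (snd q)" for \<tau>
    have pa: "proj (delta (fst p)) (fst q) = (\<Sum>\<tau>\<in>GG. chi_word (fst p) \<tau> * D \<tau>)" for p :: "word \<times> word"
      unfolding proj_val rho_delta D_def ..
    have pb: "proj (delta (snd p)) (snd q) = (\<Sum>\<tau>\<in>GG. chi_word (snd p) \<tau> * D' \<tau>)" for p :: "word \<times> word"
      unfolding proj_val rho_delta D'_def ..
    have trm: "tens (X1 p) (Y1 p) q + tens (X2 p) (Y2 p) q
        = c p * (delta (fst p) (fst q) * delta (snd p) (snd q))
          - c p * (proj (delta (fst p)) (fst q) * proj (delta (snd p)) (snd q))" for p :: "word \<times> word"
      unfolding X1_def Y1_def X2_def Y2_def tens_def falg_smult_def falg_add_def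
      by (simp add: split_def algebra_simps)
    have s1: "(\<Sum>p\<in>T. c p * (delta (fst p) (fst q) * delta (snd p) (snd q))) = falg_comult M f q"
    proof -
      have "(\<Sum>p\<in>T. c p * (delta (fst p) (fst q) * delta (snd p) (snd q))) = (\<Sum>p\<in>T. if p = q then c q else 0)"
        by (intro sum.cong refl) (auto simp: delta_def prod_eq_iff)
      also have "\<dots> = falg_comult M f q" using fT unfolding T_def c_def by auto
      finally show ?thesis .
    qed
    have s2: "(\<Sum>p\<in>T. c p * (proj (delta (fst p)) (fst q) * proj (delta (snd p)) (snd q))) = 0"
    proof -
      have "(\<Sum>p\<in>T. c p * (proj (delta (fst p)) (fst q) * proj (delta (snd p)) (snd q)))
          = (\<Sum>p\<in>T. \<Sum>\<tau>\<in>GG. \<Sum>\<tau>'\<in>GG. (c p * chi_word (fst p) \<tau> * chi_word (snd p) \<tau>') * (D \<tau> * D' \<tau>'))"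
        unfolding pa pb by (simp add: sum_product sum_distrib_left algebra_simps)
      also have "\<dots> = (\<Sum>\<tau>\<in>GG. \<Sum>p\<in>T. \<Sum>\<tau>'\<in>GG. (c p * chi_word (fst p) \<tau> * chi_word (snd p) \<tau>') * (D \<tau> * D' \<tau>'))"
        by (rule sum.swap)
      also have "\<dots> = (\<Sum>\<tau>\<in>GG. \<Sum>\<tau>'\<in>GG. \<Sum>p\<in>T. (c p * chi_word (fst p) \<tau> * chi_word (snd p) \<tau>') * (D \<tau> * D' \<tau>'))"
        by (intro sum.cong refl) (rule sum.swap)
      also have "\<dots> = (\<Sum>\<tau>\<in>GG. \<Sum>\<tau>'\<in>GG. rho f (\<tau> \<circ>\<^sub>m \<tau>') * (D \<tau> * D' \<tau>'))"
      proof (intro sum.cong refl)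
        fix \<tau> \<tau>' assume t: "\<tau> \<in> GG" and t': "\<tau>' \<in> GG"
        show "(\<Sum>p\<in>T. (c p * chi_word (fst p) \<tau> * chi_word (snd p) \<tau>') * (D \<tau> * D' \<tau>')) = rho f (\<tau> \<circ>\<^sub>m \<tau>') * (D \<tau> * D' \<tau>')"
          unfolding clause2[OF PL XI PP f t t'] T_def c_def by (simp add: sum_distrib_right)
      qed
      also have "\<dots> = 0"
      proof (intro sum.neutral ballI)
        fix \<tau> \<tau>' assume t: "\<tau> \<in> GG" and t': "\<tau>' \<in> GG"
        have "\<tau> \<circ>\<^sub>m \<tau>' \<in> GG" using t t' by (rule assoc_semigroup.mult)
        hence "rho f (\<tau> \<circ>\<^sub>m \<tau>') = 0" using fK by blast
        thus "rho f (\<tau> \<circ>\<^sub>m \<tau>') * (D \<tau> * D' \<tau>') = 0" by simp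
      qed
      finally show ?thesis .
    qed
    have "(\<Sum>p\<in>T. tens (X1 p) (Y1 p) q + tens (X2 p) (Y2 p) q)
        = (\<Sum>p\<in>T. c p * (delta (fst p) (fst q) * delta (snd p) (snd q)))
          - (\<Sum>p\<in>T. c p * (proj (delta (fst p)) (fst q) * proj (delta (snd p)) (snd q)))"
      unfolding trm by (simp add: sum_subtractf)
    thus ?thesis using s1 s2 by simp
  qed
  obtain ts where ts: "distinct ts" "set ts = T" using finite_distinct_list[OF fT] by metis
  define m where "m = length ts"
  define x where "x k = (if k < m then X1 (ts ! k) else X2 (ts ! (k - m)))" for k
  define y where "y k = (if k < m then Y1 (ts ! k) else Y2 (ts ! (k - m)))" for k
  have mem: "\<forall>k<m+m. x k \<in> falg_carrier M \<and> y k \<in> falg_carrier M \<and> (x k \<in> KK \<or> y k \<in> KK)"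
  proof (intro allI impI)
    fix k assume k: "k < m + m"
    show "x k \<in> falg_carrier M \<and> y k \<in> falg_carrier M \<and> (x k \<in> KK \<or> y k \<in> KK)"
    proof (cases "k < m")
      case True
      hence "ts ! k \<in> T" using ts m_def by auto
      thus ?thesis using True X1K Y1C unfolding x_def y_def by auto
    next
      case False
      hence "ts ! (k - m) \<in> T" using ts m_def k by auto
      thus ?thesis using False X2C Y2K unfolding x_def y_def by auto
    qed
  qed
  have eq: "falg_comult M f = (\<lambda>q. \<Sum>k<m+m. tens (x k) (y k) q)"
  proof
    fix q
    have "(\<Sum>k<m+m. tens (x k) (y k) q) = (\<Sum>k<m. tens (x k) (y k) q) + (\<Sum>k<m. tens (x (k+m)) (y (k+m)) q)"
      by (rule sum_double_split)
    also have "\<dots> = (\<Sum>k<m. tens (X1 (ts!k)) (Y1 (ts!k)) q) + (\<Sum>k<m. tens (X2 (ts!k)) (Y2 (ts!k)) q)"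
      unfolding x_def y_def by simp
    also have "\<dots> = (\<Sum>p\<in>T. tens (X1 p) (Y1 p) q) + (\<Sum>p\<in>T. tens (X2 p) (Y2 p) q)"
      using sum_list_idx[OF ts(1), of "\<lambda>p. tens (X1 p) (Y1 p) q"] sum_list_idx[OF ts(1), of "\<lambda>p. tens (X2 p) (Y2 p) q"] ts(2)
      unfolding m_def by simp
    also have "\<dots> = falg_comult M f q" unfolding ident[of q] by (simp add: sum.distrib)
    finally show "falg_comult M f q = (\<Sum>k<m+m. tens (x k) (y k) q)" by simp
  qed
  show ?thesis by (rule coideal_targetI[OF mem eq])
qed

lemma K_admissible: "admissible_ideal M N P KK"
  unfolding admissible_ideal_def
proof (intro conjI ballI allI impI)
  show "KK \<subseteq> falg_carrier M" by blast
  show "(\<lambda>w. 0) \<in> KK" using zero_carrier rho_zero by blast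
next
  fix f g assume f: "f \<in> KK" and g: "g \<in> KK"
  have fc: "f \<in> falg_carrier M" and gc: "g \<in> falg_carrier M" using f g by auto
  have "\<forall>\<sigma>\<in>GG. rho (falg_add f g) \<sigma> = 0" using f g unfolding rho_add[OF fc gc] by simp
  thus "falg_add f g \<in> KK" using add_carrier[OF fc gc] by blast
next
  fix c f assume f: "f \<in> KK"
  have fc: "f \<in> falg_carrier M" using f by auto
  have "\<forall>\<sigma>\<in>GG. rho (falg_smult c f) \<sigma> = 0" using f unfolding rho_smult[OF fc] by simp
  thus "falg_smult c f \<in> KK" using smult_carrier[OF fc] by blast
next
  fix f g assume f: "f \<in> KK" and gc: "g \<in> falg_carrier M"
  have fc: "f \<in> falg_carrier M" using f by auto
  have "\<forall>\<sigma>\<in>GG. rho (falg_mult f g) \<sigma> = 0" using f unfolding rho_mult[OF fc gc] by simp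
  thus "falg_mult f g \<in> KK" using mult_carrier[OF fc gc] by blast
  have "\<forall>\<sigma>\<in>GG. rho (falg_mult g f) \<sigma> = 0" using f unfolding rho_mult[OF gc fc] by simp
  thus "falg_mult g f \<in> KK" using mult_carrier[OF gc fc] by blast
next
  fix f assume f: "f \<in> KK"
  have fc: "f \<in> falg_carrier M" using f by auto
  have "\<forall>\<sigma>\<in>GG. rho (falg_star f) \<sigma> = 0" using f unfolding rho_star[OF fc] by simp
  thus "falg_star f \<in> KK" using star_carrier[OF fc] by blast
next
  fix i j assume i: "i \<in> {1..M}" and j: "j \<in> {1..M}"
  have g: "falg_gen i j \<in> falg_carrier M" by (rule gen_carrier[OF i j])
  have c: "falg_add (falg_mult (falg_gen i j) (falg_gen i j)) (falg_smult (-1) (falg_gen i j)) \<in> falg_carrier M"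
    by (rule add_carrier[OF mult_carrier[OF g g] smult_carrier[OF g]])
  have "rho (falg_add (falg_mult (falg_gen i j) (falg_gen i j)) (falg_smult (-1) (falg_gen i j))) \<sigma> = 0" for \<sigma>
    unfolding rho_add[OF mult_carrier[OF g g] smult_carrier[OF g]] rho_mult[OF g g] rho_smult[OF g] rho_gen
    using ind_01[of \<sigma> "(i,j)"] by auto
  thus "falg_add (falg_mult (falg_gen i j) (falg_gen i j)) (falg_smult (-1) (falg_gen i j)) \<in> KK" using c by blast
next
  fix i j k assume i: "i \<in> {1..M}" and j: "j \<in> {1..M}" and k: "k \<in> {1..M}" and jk: "j \<noteq> k"
  have g1: "falg_gen i j \<in> falg_carrier M" by (rule gen_carrier[OF i j])
  have g2: "falg_gen i k \<in> falg_carrier M" by (rule gen_carrier[OF i k])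
  have "rho (falg_mult (falg_gen i j) (falg_gen i k)) \<sigma> = 0" if s: "\<sigma> \<in> GG" for \<sigma>
  proof -
    have inj: "inj_on \<sigma> (dom \<sigma>)" using Gpp[OF s] unfolding partial_perm_def by blast
    have "\<not> (\<sigma> j = Some i \<and> \<sigma> k = Some i)"
    proof
      assume "\<sigma> j = Some i \<and> \<sigma> k = Some i"
      hence "j = k" using inj unfolding inj_on_def by (metis domI)
      thus False using jk by simp
    qed
    thus ?thesis unfolding rho_mult[OF g1 g2] rho_gen ind_def by auto
  qed
  thus "falg_mult (falg_gen i j) (falg_gen i k) \<in> KK" using mult_carrier[OF g1 g2] by blast
next
  fix i j k assume i: "i \<in> {1..M}" and j: "j \<in> {1..M}" and k: "k \<in> {1..M}" and ik: "i \<noteq> k"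
  have g1: "falg_gen i j \<in> falg_carrier M" by (rule gen_carrier[OF i j])
  have g2: "falg_gen k j \<in> falg_carrier M" by (rule gen_carrier[OF k j])
  have "rho (falg_mult (falg_gen i j) (falg_gen k j)) \<sigma> = 0" for \<sigma>
    unfolding rho_mult[OF g1 g2] rho_gen ind_def using ik by auto
  thus "falg_mult (falg_gen i j) (falg_gen k j) \<in> KK" using mult_carrier[OF g1 g2] by blast
next
  fix f assume f: "f \<in> KK"
  show "falg_comult M f \<in> coideal_target M KK" by (rule coideal[OF f])
next
  fix f assume f: "f \<in> KK"
  have "\<forall>x\<in>{1..N}. rho f (sigma_L M L x) = 0"
    using f assoc_semigroup.gen[of _ N M L] by blast
  thus "pi_P N P f = 0\<^sub>m N N" using piP_zero_iff[OF PL XI PP] f by blast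
qed

lemma bialg: "bialgebra_image_is_CG M N P GG"
  unfolding bialgebra_image_is_CG_def
proof (intro conjI allI ballI impI)
  fix h :: "(nat \<rightharpoonup> nat) \<Rightarrow> complex"
  show "\<exists>f\<in>falg_carrier M. \<forall>\<sigma>\<in>GG. rho f \<sigma> = h \<sigma>" by (rule surj_rho[OF finG Gpp])
next
  fix f \<sigma> \<tau> assume f: "f \<in> falg_carrier M" and s: "\<sigma> \<in> GG" and t: "\<tau> \<in> GG"
  show "rho f (\<sigma> \<circ>\<^sub>m \<tau>) = (\<Sum>p\<in>{p. falg_comult M f p \<noteq> 0}. falg_comult M f p * chi_word (fst p) \<sigma> * chi_word (snd p) \<tau>)"
    by (rule clause2[OF PL XI PP f s t])
next
  show "admissible_ideal M N P KK" by (rule K_admissible)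
next
  fix I assume "admissible_ideal M N P I"
  thus "I \<subseteq> KK" by (rule clause4[OF PL XI PP])
qed

end


theorem theorem2p6:
  fixes M N :: nat and P :: "nat \<Rightarrow> nat \<Rightarrow> complex mat"
  assumes "M \<le> N"
    and "submagic M N P"
    and "\<forall>i\<in>{1..M}. \<forall>j\<in>{1..M}. rank_one_projection N (P i j)"
  shows "((\<forall>i\<in>{1..M}. \<forall>j\<in>{1..M}. \<forall>k\<in>{1..M}. \<forall>l\<in>{1..M}. P i j * P k l = P k l * P i j)
           \<longleftrightarrow> (\<exists>L \<xi>. pre_latin_square M N L \<and> orthogonal_basis N \<xi> \<and>
                   (\<forall>i\<in>{1..M}. \<forall>j\<in>{1..M}. P i j = Proj N (\<xi> (L i j)))))
         \<and> (\<forall>L \<xi>. pre_latin_square M N L \<and> orthogonal_basis N \<xi> \<and>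
                (\<forall>i\<in>{1..M}. \<forall>j\<in>{1..M}. P i j = Proj N (\<xi> (L i j)))
           \<longrightarrow> bialgebra_image_is_CG M N P (assoc_semigroup M N L))"
proof -
  have eq: "(\<forall>i\<in>{1..M}. \<forall>j\<in>{1..M}. \<forall>k\<in>{1..M}. \<forall>l\<in>{1..M}. P i j * P k l = P k l * P i j)
           \<longleftrightarrow> (\<exists>L \<xi>. pre_latin_square M N L \<and> orthogonal_basis N \<xi> \<and>
                   (\<forall>i\<in>{1..M}. \<forall>j\<in>{1..M}. P i j = Proj N (\<xi> (L i j))))"
  proof
    assume "\<forall>i\<in>{1..M}. \<forall>j\<in>{1..M}. \<forall>k\<in>{1..M}. \<forall>l\<in>{1..M}. P i j * P k l = P k l * P i j"
    thus "\<exists>L \<xi>. pre_latin_square M N L \<and> orthogonal_basis N \<xi> \<and>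
                   (\<forall>i\<in>{1..M}. \<forall>j\<in>{1..M}. P i j = Proj N (\<xi> (L i j)))"
      by (rule commute_impl_part[OF assms(2,3)])
  next
    assume "\<exists>L \<xi>. pre_latin_square M N L \<and> orthogonal_basis N \<xi> \<and>
                   (\<forall>i\<in>{1..M}. \<forall>j\<in>{1..M}. P i j = Proj N (\<xi> (L i j)))"
    then obtain L \<xi> where "pre_latin_square M N L" "orthogonal_basis N \<xi>"
      "\<forall>i\<in>{1..M}. \<forall>j\<in>{1..M}. P i j = Proj N (\<xi> (L i j))" by blast
    thus "\<forall>i\<in>{1..M}. \<forall>j\<in>{1..M}. \<forall>k\<in>{1..M}. \<forall>l\<in>{1..M}. P i j * P k l = P k l * P i j"
      by (rule part_impl_commute)
  qed
  have bi: "\<forall>L \<xi>. pre_latin_square M N L \<and> orthogonal_basis N \<xi> \<and>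
                (\<forall>i\<in>{1..M}. \<forall>j\<in>{1..M}. P i j = Proj N (\<xi> (L i j)))
           \<longrightarrow> bialgebra_image_is_CG M N P (assoc_semigroup M N L)"
    using bialg by blast
  show ?thesis using eq bi by blast
qed

end
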